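(* Fix $L\in\mathbb{N}$ and $b\in(0,1)$. For each $n$ let $d_n=3\log n$ and $r_\ell=n^{(1-b)2^{-\ell}}$, $\ell=1,\dots,L$, and consider an $L$-layer angle-dense construction with these parameters (which depends only on $n,L,b$), with code words $o_{s^L}$ and decoding sets \[ \mathcal{D}_{s^L}=\bigcap_{\ell=1}^L\Bigl\{y\in\mathbb{R}^n:\ \frac{|(y-o_{s^\ell},\,o_{s^\ell}-o_{s^{\ell-1}})|}{\|o_{s^\ell}-o_{s^{\ell-1}}\|}\le\log n\Bigr\}. \] The arrangements can be chosen (independently of any channel parameters) so that $\frac{\log N}{n\log n}\ge\frac{1-b}{2}\sum_{\ell=1}^L2^{-\ell}-o(1)$ as $n\to\infty$, and such that for every $P>0$ and every $\sigma>0$ there is $n_0$ with the property that for all $n\ge n_0$ all code words satisfy $\|o_{s^L}\|^2\le nP$ and the code is an $(n,N,L\lambda'_n,\lambda'_n)$ DI code for the AWGN channel with noise standard deviation $\sigma$ and power constraint $P$, where $\lambda'_n=2\Phi(-\log n/\sigma)$. Consequently, this universal family achieves the linearithmic rate $\frac12$ (i.e. the capacity) simultaneously for all AWGN channels.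
   Context: AWGN channel: on input $x^n\in\mathbb{R}^n$ the output is $Y^n=x^n+\sigma Z^n$, $Z^n$ with i.i.d. $\mathcal{N}(0,1)$ components; output distribution $\mathcal{G}_{x^n}=\mathcal{N}(x^n,\sigma^2I_n)$; admissible inputs satisfy $\|x^n\|^2\le nP$. An $(n,N,\lambda_1,\lambda_2)$ DI code is a family $\{(u_i,\mathcal{D}_i)\}_{i=1}^N$ of admissible $u_i$ and measurable $\mathcal{D}_i\subseteq\mathbb{R}^n$ with $\mathcal{G}_{u_i}(\mathcal{D}_i)\ge1-\lambda_1$ and $\mathcal{G}_{u_j}(\mathcal{D}_i)\le\lambda_2$ for $i\neq j$. $\Phi$ is the standard Gaussian CDF; logarithms are base 2. $L$-layer angle-dense construction: set $o_{s^0}:=0$; recursively for $\ell=1,\dots,L$ and each $o_{s^{\ell-1}}$, let $V_{s^{\ell-1}}$ be the span of the path vectors $o_{s^j}-o_{s^{j-1}}$, $j<\ell$, and choose points $o_{(s^{\ell-1},s)}$, $s=1,\dots,N_\ell$, forming a $d$-angle-dense arrangement on the sphere of radius $r_\ell$ centred at $o_{s^{\ell-1}}$ inside the affine subspace $o_{s^{\ell-1}}+V_{s^{\ell-1}}^\perp$; the code words are the $N=\prod_\ell N_\ell$ points $o_{s^L}$. Points $\{p_j\}$ on a sphere centred at $c$ are $d$-angle-dense if, with $a_j=p_j-c$, $\|\Pi_{a_k}a_j-a_k\|\ge d$ for $j\neq k$, where $\Pi_{\vec a}\vec v:=\frac{(\vec a,\vec v)}{\|\vec a\|^2}\vec a$.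 *)

theory Defs
  imports "HOL-Probability.Probability"
begin

text \<open>Vectors of R^n are modelled as functions nat => real; only coordinates i < n matter.
  The ambient space R^n is the extensional function space used by the product measure.\<close>

definition Rn :: "nat \<Rightarrow> (nat \<Rightarrow> real) set" where
  "Rn n = PiE {..<n} (\<lambda>_. UNIV)"

definition origin :: "nat \<Rightarrow> (nat \<Rightarrow> real)" where
  "origin n = (\<lambda>i\<in>{..<n}. 0)"

definition inner_n :: "nat \<Rightarrow> (nat \<Rightarrow> real) \<Rightarrow> (nat \<Rightarrow> real) \<Rightarrow> real" where
  "inner_n n x y = (\<Sum>i<n. x i * y i)"

definition norm_n :: "nat \<Rightarrow> (nat \<Rightarrow> real) \<Rightarrow> real" where
  "norm_n n x = sqrt (inner_n n x x)"

definition proj_n :: "nat \<Rightarrow> (nat \<Rightarrow> real) \<Rightarrow> (nat \<Rightarrow> real) \<Rightarrow> (nat \<Rightarrow> real)" where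
  "proj_n n a v = (\<lambda>i. inner_n n a v / (norm_n n a)\<^sup>2 * a i)"

definition gauss_out :: "nat \<Rightarrow> real \<Rightarrow> (nat \<Rightarrow> real) \<Rightarrow> (nat \<Rightarrow> real) measure" where
  "gauss_out n \<sigma> x = PiM {..<n} (\<lambda>i. density lborel (\<lambda>y. ennreal (normal_density (x i) \<sigma> y)))"

definition Phi :: "real \<Rightarrow> real" where
  "Phi x = measure (density lborel (\<lambda>y. ennreal (std_normal_density y))) {..x}"

definition DI_code :: "nat \<Rightarrow> real \<Rightarrow> real \<Rightarrow> 'i set \<Rightarrow> ('i \<Rightarrow> nat \<Rightarrow> real)
    \<Rightarrow> ('i \<Rightarrow> (nat \<Rightarrow> real) set) \<Rightarrow> real \<Rightarrow> real \<Rightarrow> bool" where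
  "DI_code n P \<sigma> I u D lam1 lam2 \<longleftrightarrow>
     finite I \<and>
     (\<forall>i\<in>I. u i \<in> Rn n \<and> (norm_n n (u i))\<^sup>2 \<le> real n * P) \<and>
     (\<forall>i\<in>I. D i \<in> sets (gauss_out n \<sigma> (u i))) \<and>
     (\<forall>i\<in>I. measure (gauss_out n \<sigma> (u i)) (D i) \<ge> 1 - lam1) \<and>
     (\<forall>i\<in>I. \<forall>j\<in>I. i \<noteq> j \<longrightarrow> measure (gauss_out n \<sigma> (u j)) (D i) \<le> lam2)"

definition angle_dense :: "nat \<Rightarrow> real \<Rightarrow> (nat \<Rightarrow> real) \<Rightarrow> nat \<Rightarrow> (nat \<Rightarrow> nat \<Rightarrow> real) \<Rightarrow> bool" where
  "angle_dense n d c m p \<longleftrightarrow>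
     (\<forall>j<m. \<forall>k<m. j \<noteq> k \<longrightarrow>
        norm_n n (proj_n n (p k - c) (p j - c) - (p k - c)) \<ge> d)"

text \<open>Index sequences s^k = (s_1,...,s_k) with s_l in {1..N_l} (here 0-based: s!(l-1) < N l).\<close>
definition idx :: "(nat \<Rightarrow> nat) \<Rightarrow> nat \<Rightarrow> nat list set" where
  "idx Ns k = {s. length s = k \<and> (\<forall>j<k. s ! j < Ns (j + 1))}"

text \<open>Path vector number j (1 <= j <= length s) of the node s.\<close>
definition path_vec :: "(nat list \<Rightarrow> nat \<Rightarrow> real) \<Rightarrow> nat list \<Rightarrow> nat \<Rightarrow> (nat \<Rightarrow> real)" where
  "path_vec pt s j = pt (take j s) - pt (take (j - 1) s)"

text \<open>The node pt s (s of length l) is the child of pt (butlast s). The children of pt s lie in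
  R^n, on the sphere of radius r (l+1) around o s, inside pt s + V^perp where V is the span of
  the path vectors of s (orthogonality to the span = orthogonality to each path vector),
  and they form a d-angle-dense arrangement.\<close>
definition angle_dense_construction :: "nat \<Rightarrow> nat \<Rightarrow> real \<Rightarrow> (nat \<Rightarrow> real) \<Rightarrow> (nat \<Rightarrow> nat)
    \<Rightarrow> (nat list \<Rightarrow> nat \<Rightarrow> real) \<Rightarrow> bool" where
  "angle_dense_construction n L d r Ns pt \<longleftrightarrow>
     pt [] = origin n \<and>
     (\<forall>l<L. \<forall>s\<in>idx Ns l.
        (\<forall>t < Ns (l + 1).
            pt (s @ [t]) \<in> Rn n \<and>
            norm_n n (pt (s @ [t]) - pt s) = r (l + 1) \<and>
            (\<forall>j\<in>{1..l}. inner_n n (path_vec pt s j) (pt (s @ [t]) - pt s) = 0)) \<and>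
        angle_dense n d (pt s) (Ns (l + 1)) (\<lambda>t. pt (s @ [t])))"

definition decoding_set :: "nat \<Rightarrow> nat \<Rightarrow> (nat list \<Rightarrow> nat \<Rightarrow> real) \<Rightarrow> nat list \<Rightarrow> (nat \<Rightarrow> real) set" where
  "decoding_set n L pt s =
     {y \<in> Rn n. \<forall>l\<in>{1..L}.
        \<bar>inner_n n (y - pt (take l s)) (path_vec pt s l)\<bar> / norm_n n (path_vec pt s l) \<le> log 2 (real n)}"

end

theory Submission
  imports Defs "HOL-Library.Function_Algebras" "HOL-Real_Asymp.Real_Asymp"
begin


lemma inner_n_commute: "inner_n n x y = inner_n n y x"
  unfolding inner_n_def by (simp add: mult.commute)

lemma inner_n_add1: "inner_n n (x + y) z = inner_n n x z + inner_n n y z"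
  unfolding inner_n_def by (simp add: algebra_simps sum.distrib)

lemma inner_n_add2: "inner_n n z (x + y) = inner_n n z x + inner_n n z y"
  unfolding inner_n_def by (simp add: algebra_simps sum.distrib)

lemma inner_n_diff1: "inner_n n (x - y) z = inner_n n x z - inner_n n y z"
  unfolding inner_n_def by (simp add: algebra_simps sum_subtractf)

lemma inner_n_diff2: "inner_n n z (x - y) = inner_n n z x - inner_n n z y"
  unfolding inner_n_def by (simp add: algebra_simps sum_subtractf)

lemma inner_n_scale1: "inner_n n (\<lambda>i. c * x i) y = c * inner_n n x y"
  unfolding inner_n_def by (simp add: algebra_simps sum_distrib_left)

lemma inner_n_scale2: "inner_n n y (\<lambda>i. c * x i) = c * inner_n n y x"
  unfolding inner_n_def by (simp add: algebra_simps sum_distrib_left)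

lemma inner_n_cong: "(\<And>i. i < n \<Longrightarrow> x i = x' i) \<Longrightarrow> (\<And>i. i < n \<Longrightarrow> y i = y' i) \<Longrightarrow>
  inner_n n x y = inner_n n x' y'"
  unfolding inner_n_def by (intro sum.cong) auto

lemma inner_n_sum1: "finite A \<Longrightarrow> inner_n n (\<Sum>j\<in>A. f j) y = (\<Sum>j\<in>A. inner_n n (f j) y)"
  by (induction A rule: finite_induct) (auto simp: inner_n_def algebra_simps sum.distrib)

lemma inner_n_sum2: "finite A \<Longrightarrow> inner_n n y (\<Sum>j\<in>A. f j) = (\<Sum>j\<in>A. inner_n n y (f j))"
  using inner_n_sum1[of A n f y] by (simp add: inner_n_commute)

lemma inner_n_self_nonneg: "0 \<le> inner_n n x x"
  unfolding inner_n_def by (auto intro!: sum_nonneg)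

lemma norm_n_nonneg: "0 \<le> norm_n n x"
  unfolding norm_n_def by (simp add: inner_n_self_nonneg)

lemma norm_n_sq: "(norm_n n x)\<^sup>2 = inner_n n x x"
  unfolding norm_n_def using inner_n_self_nonneg[of n x] by simp

lemma inner_n_self_zero: "inner_n n y y = 0 \<Longrightarrow> inner_n n x y = 0"
proof -
  assume "inner_n n y y = 0"
  then have "\<forall>i\<in>{..<n}. y i * y i = 0" unfolding inner_n_def
    by (subst sum_nonneg_eq_0_iff[symmetric]) auto
  then show ?thesis unfolding inner_n_def by auto
qed

lemma cauchy_schwarz_sq: "(inner_n n x y)\<^sup>2 \<le> inner_n n x x * inner_n n y y"
proof (cases "inner_n n y y = 0")
  case True then show ?thesis using inner_n_self_zero[OF True, of x] by simp
next
  case False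
  then have yy: "inner_n n y y > 0" using inner_n_self_nonneg[of n y] by simp
  define c where "c = inner_n n x y / inner_n n y y"
  have "0 \<le> inner_n n (\<lambda>i. x i - c * y i) (\<lambda>i. x i - c * y i)" by (rule inner_n_self_nonneg)
  also have "\<dots> = inner_n n x x - 2 * c * inner_n n x y + c\<^sup>2 * inner_n n y y"
    unfolding inner_n_def
    by (simp add: algebra_simps sum.distrib sum_subtractf sum_distrib_left power2_eq_square)
  also have "\<dots> = inner_n n x x - (inner_n n x y)\<^sup>2 / inner_n n y y"
    using yy unfolding c_def by (simp add: field_simps power2_eq_square)
  finally show ?thesis using yy by (simp add: field_simps)
qed

lemma cauchy_schwarz: "\<bar>inner_n n x y\<bar> \<le> norm_n n x * norm_n n y"
proof -
  have "(inner_n n x y)\<^sup>2 \<le> (norm_n n x * norm_n n y)\<^sup>2"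
    using cauchy_schwarz_sq[of n x y] by (simp add: power_mult_distrib norm_n_sq)
  then show ?thesis using norm_n_nonneg[of n x] norm_n_nonneg[of n y]
    using power2_le_imp_le[of "\<bar>inner_n n x y\<bar>" "norm_n n x * norm_n n y"] by simp
qed


lemma num_sep:
  fixes g W r t L :: real
  assumes g: "g \<ge> 3 * r * t" and W: "W \<ge> 0" "W\<^sup>2 \<le> L * r" and t: "t \<ge> 6 * L" "t > 0" and r: "r > 0"
  shows "g - W * sqrt (2 * g) \<ge> 2 * r * t"
proof -
  define x where "x = sqrt g"
  define x0 where "x0 = sqrt (3 * r * t)"
  have x0pos: "x0 \<ge> 0" unfolding x0_def using r t by simp
  have gx: "g = x\<^sup>2" unfolding x_def using g r t
    by (metis mult_nonneg_nonneg order.trans real_sqrt_pow2 less_imp_le zero_le_numeral)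
  have x0sq: "x0\<^sup>2 = 3 * r * t" unfolding x0_def using r t by simp
  have xx0: "x \<ge> x0" unfolding x_def x0_def using g by simp
  have L0: "L * r \<ge> 0" using W by (meson order.trans zero_le_power2)
  have "(sqrt 2 * W)\<^sup>2 \<le> x0\<^sup>2"
  proof -
    have "6 * L * r \<le> t * r" using t r by (intro mult_right_mono) auto
    have "(sqrt 2 * W)\<^sup>2 = 2 * W\<^sup>2" by (simp add: power_mult_distrib)
    also have "\<dots> \<le> 2 * (L * r)" using W by simp
    also have "\<dots> \<le> 3 * r * t" using \<open>6 * L * r \<le> t * r\<close> r t by (simp add: algebra_simps)
    finally show ?thesis using x0sq by simp
  qed
  then have w0: "sqrt 2 * W \<le> x0" using x0pos by (rule power2_le_imp_le)
  have e: "W * sqrt (2 * g) = sqrt 2 * W * x"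
    unfolding x_def by (simp add: real_sqrt_mult)
  have "g - W * sqrt (2 * g) = x * (x - sqrt 2 * W)" 
    by (subst e) (simp add: gx power2_eq_square algebra_simps)
  moreover have "x * (x - sqrt 2 * W) \<ge> x0 * (x0 - sqrt 2 * W)"
    using xx0 w0 x0pos by (intro mult_mono) auto
  moreover have "x0 * (x0 - sqrt 2 * W) = x0\<^sup>2 - sqrt 2 * W * x0"
    by (simp add: power2_eq_square right_diff_distrib)
  ultimately have A: "g - W * sqrt (2 * g) \<ge> 3 * r * t - sqrt 2 * W * x0"
    using x0sq by linarith
  have "(sqrt 2 * W * x0)\<^sup>2 = 2 * W\<^sup>2 * (3 * r * t)"
    using x0sq by (simp add: power_mult_distrib)
  also have "\<dots> \<le> 2 * (L * r) * (3 * r * t)"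
    using W r t by (intro mult_right_mono mult_left_mono) auto
  also have "\<dots> = (6 * L) * (r * r * t)" by (simp only: mult_ac)
  also have "\<dots> \<le> t * (r * r * t)" using t r by (intro mult_right_mono) auto
  also have "\<dots> = (r * t)\<^sup>2" by (simp add: power2_eq_square)
  finally have "sqrt 2 * W * x0 \<le> r * t" by (rule power2_le_imp_le) (use r t in simp)
  then show ?thesis using A by linarith
qed


lemma proj_minus_norm:
  assumes r: "r > 0" "norm_n n a = r"
  shows "norm_n n (proj_n n a a' - a) = \<bar>inner_n n a a' / r\<^sup>2 - 1\<bar> * r"
proof -
  define c where "c = inner_n n a a' / r\<^sup>2"
  have eq: "proj_n n a a' - a = (\<lambda>i. (c - 1) * a i)"
    unfolding proj_n_def c_def using r by (auto simp: algebra_simps)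
  have "inner_n n (\<lambda>i. (c - 1) * a i) (\<lambda>i. (c - 1) * a i) = (c - 1)\<^sup>2 * r\<^sup>2"
    by (simp add: inner_n_scale1 inner_n_scale2 norm_n_sq[symmetric] r power2_eq_square)
  then show ?thesis unfolding norm_n_def eq c_def using r
    by (simp add: real_sqrt_mult)
qed

lemma sep_vec:
  assumes r: "r > 0" "norm_n n a = r" "norm_n n a' = r"
    and w: "inner_n n w a' = 0" "(norm_n n w)\<^sup>2 \<le> L * r"
    and d: "norm_n n (proj_n n a a' - a) \<ge> 3 * t"
    and t: "t \<ge> 6 * L" "t > 0"
  shows "\<bar>inner_n n w a + inner_n n a' a - inner_n n a a\<bar> \<ge> 2 * r * t"
proof -
  define \<iota> where "\<iota> = inner_n n a a'"
  define g where "g = r\<^sup>2 - \<iota>"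
  have aa: "inner_n n a a = r\<^sup>2" using r by (simp add: norm_n_sq[symmetric])
  have a'a': "inner_n n a' a' = r\<^sup>2" using r by (simp add: norm_n_sq[symmetric])
  have cs: "\<bar>\<iota>\<bar> \<le> r\<^sup>2" unfolding \<iota>_def using cauchy_schwarz[of n a a'] r by (simp add: power2_eq_square)
  have "norm_n n (proj_n n a a' - a) = \<bar>\<iota> / r\<^sup>2 - 1\<bar> * r" unfolding \<iota>_def by (rule proj_minus_norm[OF r(1,2)])
  also have "\<bar>\<iota> / r\<^sup>2 - 1\<bar> = 1 - \<iota> / r\<^sup>2"
  proof -
    have "\<iota> \<le> r\<^sup>2" using cs by linarith
    then have "\<iota> / r\<^sup>2 \<le> 1" using r by (simp add: divide_le_eq_1)
    then show ?thesis by simp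
  qed
  also have "(1 - \<iota> / r\<^sup>2) * r = g / r" unfolding g_def using r by (simp add: field_simps power2_eq_square)
  finally have "g / r \<ge> 3 * t" using d by linarith
  then have g: "g \<ge> 3 * r * t" using r by (simp add: field_simps)
  define c where "c = \<iota> / r\<^sup>2"
  define a2 where "a2 = (\<lambda>i. a i - c * a' i)"
  have "inner_n n w a2 = inner_n n w a"
    unfolding a2_def inner_n_def using w(1) unfolding inner_n_def
    by (simp add: algebra_simps sum_subtractf sum_distrib_left[symmetric])
  have na2: "inner_n n a2 a2 = r\<^sup>2 - \<iota>\<^sup>2 / r\<^sup>2"
  proof -
    have "inner_n n a2 a2 = inner_n n a a - 2 * c * inner_n n a a' + c\<^sup>2 * inner_n n a' a'"
      unfolding a2_def inner_n_def
      by (simp add: algebra_simps sum.distrib sum_subtractf sum_distrib_left power2_eq_square)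
    then show ?thesis using r unfolding c_def \<iota>_def[symmetric] aa a'a'
      by (simp add: field_simps power2_eq_square)
  qed
  have "inner_n n a2 a2 \<le> 2 * g"
  proof -
    have "0 \<le> (r - \<iota> / r)\<^sup>2" by simp
    then have "0 \<le> r\<^sup>2 - 2 * \<iota> + \<iota>\<^sup>2 / r\<^sup>2" using r by (simp add: power2_eq_square field_simps)
    then show ?thesis using na2 unfolding g_def by simp
  qed
  then have "norm_n n a2 \<le> sqrt (2 * g)" unfolding norm_n_def by simp
  then have wa: "\<bar>inner_n n w a\<bar> \<le> norm_n n w * sqrt (2 * g)"
    using cauchy_schwarz[of n w a2] \<open>inner_n n w a2 = inner_n n w a\<close> norm_n_nonneg[of n w]
    by (metis mult_left_mono order.trans)
  have "g - norm_n n w * sqrt (2 * g) \<ge> 2 * r * t"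
    by (rule num_sep[OF g norm_n_nonneg w(2) t r(1)])
  moreover have "inner_n n a' a - inner_n n a a = - g"
    unfolding g_def \<iota>_def aa by (simp add: inner_n_commute)
  ultimately show ?thesis using wa by linarith
qed


lemma prob_space_normal_dens: "0 < \<sigma> \<Longrightarrow> prob_space (density lborel (\<lambda>y. ennreal (normal_density m \<sigma> y)))"
  by (rule prob_space_normal_density)

lemma gauss_prob: assumes "0 < \<sigma>" shows "prob_space (gauss_out n \<sigma> x)"
  unfolding gauss_out_def
  by (intro prob_space_PiM prob_space_normal_density assms)

lemma space_gauss: "space (gauss_out n \<sigma> x) = Rn n"
  unfolding gauss_out_def Rn_def by (simp add: space_PiM)

lemma sets_gauss: "sets (gauss_out n \<sigma> x) = sets (PiM {..<n} (\<lambda>_. borel))"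
  unfolding gauss_out_def by (intro sets_PiM_cong) auto

lemma gauss_coord_distr:
  assumes "0 < \<sigma>" "i < n"
  shows "distributed (gauss_out n \<sigma> x) lborel (\<lambda>y. y i) (normal_density (x i) \<sigma>)"
proof -
  have "distr (gauss_out n \<sigma> x) lborel (\<lambda>y. y i) = distr (gauss_out n \<sigma> x) (density lborel (\<lambda>y. ennreal (normal_density (x i) \<sigma> y))) (\<lambda>y. y i)"
    by (intro distr_cong) auto
  also have "\<dots> = density lborel (\<lambda>y. ennreal (normal_density (x i) \<sigma> y))"
    unfolding gauss_out_def
    by (rule distr_PiM_component[where M="\<lambda>i. density lborel (\<lambda>y. ennreal (normal_density (x i) \<sigma> y))", simplified])
       (use assms in \<open>auto intro: prob_space_normal_density\<close>)
  finally show ?thesis unfolding distributed_def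
    using assms by (auto simp: gauss_out_def)
qed

lemma gauss_indep:
  assumes "0 < \<sigma>" "n > 0"
  shows "prob_space.indep_vars (gauss_out n \<sigma> x) (\<lambda>_. borel) (\<lambda>i y. y i) {..<n}"
proof -
  interpret prob_space "gauss_out n \<sigma> x" by (rule gauss_prob[OF assms(1)])
  show ?thesis
  proof (subst indep_vars_iff_distr_eq_PiM')
    show "{..<n} \<noteq> {}" using assms by auto
    show "\<And>i. i \<in> {..<n} \<Longrightarrow> random_variable borel (\<lambda>y. y i)"
      by (auto simp: gauss_out_def)
    have "distr (gauss_out n \<sigma> x) (PiM {..<n} (\<lambda>_. borel)) (\<lambda>y. \<lambda>i\<in>{..<n}. y i)
       = distr (gauss_out n \<sigma> x) (gauss_out n \<sigma> x) (\<lambda>y. y)"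
      by (intro distr_cong) (auto simp: space_gauss sets_gauss Rn_def)
    also have "\<dots> = gauss_out n \<sigma> x" by simp
    also have "\<dots> = PiM {..<n} (\<lambda>i. distr (gauss_out n \<sigma> x) borel (\<lambda>y. y i))"
    proof -
      have "\<And>i. i \<in> {..<n} \<Longrightarrow> distr (gauss_out n \<sigma> x) borel (\<lambda>y. y i) = density lborel (\<lambda>y. ennreal (normal_density (x i) \<sigma> y))"
      proof -
        fix i assume "i \<in> {..<n}"
        have "distr (gauss_out n \<sigma> x) borel (\<lambda>y. y i) = distr (gauss_out n \<sigma> x) lborel (\<lambda>y. y i)"
          by (intro distr_cong) auto
        then show "distr (gauss_out n \<sigma> x) borel (\<lambda>y. y i) = density lborel (\<lambda>y. ennreal (normal_density (x i) \<sigma> y))"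
          using gauss_coord_distr[OF assms(1), of i n x] \<open>i \<in> {..<n}\<close> by (simp add: distributed_def)
      qed
      then show ?thesis unfolding gauss_out_def by (intro PiM_cong) auto
    qed
    finally show "distr (gauss_out n \<sigma> x) (PiM {..<n} (\<lambda>_. borel)) (\<lambda>y. \<lambda>i\<in>{..<n}. y i) =
      PiM {..<n} (\<lambda>i. distr (gauss_out n \<sigma> x) borel (\<lambda>y. y i))" .
  qed
qed

lemma gauss_proj:
  assumes s: "0 < \<sigma>" and e: "(\<Sum>i<n. (e i)\<^sup>2) = 1"
  shows "distributed (gauss_out n \<sigma> x) lborel (\<lambda>y. inner_n n (y - x) e / \<sigma>) std_normal_density"
proof -
  interpret prob_space "gauss_out n \<sigma> x" by (rule gauss_prob[OF s])
  define J where "J = {i. i < n \<and> e i \<noteq> 0}"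
  have J: "finite J" "J \<subseteq> {..<n}" unfolding J_def by auto
  have "J \<noteq> {}"
  proof
    assume "J = {}"
    then have "\<And>i. i < n \<Longrightarrow> e i = 0" unfolding J_def by auto
    then show False using e by simp
  qed
  then have n: "n > 0" using J by auto
  have eJ: "(\<Sum>i\<in>J. (e i)\<^sup>2) = 1"
    using e by (subst e[symmetric]) (rule sum.mono_neutral_left, auto simp: J_def)
  have inner: "inner_n n (y - x) e = (\<Sum>i\<in>J. (- x i * e i) + e i * y i)" for y
  proof -
    have "inner_n n (y - x) e = (\<Sum>i\<in>J. (y - x) i * e i)"
      unfolding inner_n_def by (rule sum.mono_neutral_right) (auto simp: J_def)
    then show ?thesis by (simp add: algebra_simps)
  qed
  have ind: "indep_vars (\<lambda>_. borel) (\<lambda>i y. (- x i * e i) + e i * y i) J"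
    using indep_vars_compose2[OF indep_vars_subset[OF gauss_indep[OF s n] J(2)], of "\<lambda>i z. (- x i * e i) + e i * z" "\<lambda>_. borel"]
    by auto
  have dist: "distributed (gauss_out n \<sigma> x) lborel (\<lambda>y. (- x i * e i) + e i * y i) (normal_density 0 (\<bar>e i\<bar> * \<sigma>))"
    if "i \<in> J" for i
    using normal_density_affine[OF gauss_coord_distr[OF s, of i n x] s, of "e i" "- x i * e i"] that
    by (auto simp: J_def)
  have "distributed (gauss_out n \<sigma> x) lborel (\<lambda>y. \<Sum>i\<in>J. (- x i * e i) + e i * y i)
     (normal_density (\<Sum>i\<in>J. 0) (sqrt (\<Sum>i\<in>J. (\<bar>e i\<bar> * \<sigma>)\<^sup>2)))"
    by (rule sum_indep_normal[OF J(1) \<open>J \<noteq> {}\<close> ind]) (use s dist in \<open>auto simp: J_def\<close>)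
  moreover have "sqrt (\<Sum>i\<in>J. (\<bar>e i\<bar> * \<sigma>)\<^sup>2) = \<sigma>"
  proof -
    have "(\<Sum>i\<in>J. (\<bar>e i\<bar> * \<sigma>)\<^sup>2) = \<sigma>\<^sup>2 * (\<Sum>i\<in>J. (e i)\<^sup>2)"
      by (simp add: sum_distrib_left power_mult_distrib mult.commute)
    then show ?thesis using eJ s by simp
  qed
  ultimately have d: "distributed (gauss_out n \<sigma> x) lborel (\<lambda>y. inner_n n (y - x) e) (normal_density 0 \<sigma>)"
    by (simp add: inner)
  show ?thesis
    using normal_density_affine[OF d s, of "1/\<sigma>" 0] s by (simp add: field_simps)
qed

lemma (in prob_space) std_le:
  assumes Z: "distributed M lborel Z std_normal_density"
  shows "measure M {y\<in>space M. Z y \<le> c} = Phi c"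
proof -
  have m: "Z \<in> measurable M lborel" using Z by (simp add: distributed_def)
  have "measure M {y\<in>space M. Z y \<le> c} = measure M (Z -` {..c} \<inter> space M)"
    by (rule arg_cong[where f="measure M"]) auto
  also have "\<dots> = measure (distr M lborel Z) {..c}"
    by (rule measure_distr[symmetric]) (use m in auto)
  also have "\<dots> = Phi c" using Z unfolding distributed_def Phi_def by simp
  finally show ?thesis .
qed

lemma (in prob_space) std_ge:
  assumes Z: "distributed M lborel Z std_normal_density"
  shows "measure M {y\<in>space M. Z y \<ge> c} = Phi (- c)"
proof -
  have Z': "distributed M lborel (\<lambda>y. 0 + (-1) * Z y) (normal_density (0 + (-1) * 0) (\<bar>-1\<bar> * 1))"
    by (rule normal_density_affine[OF Z]) auto
  have "measure M {y\<in>space M. Z y \<ge> c} = measure M {y\<in>space M. 0 + (-1) * Z y \<le> - c}"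
    by (rule arg_cong[where f="measure M"]) auto
  also have "\<dots> = Phi (- c)" by (rule std_le) (use Z' in simp)
  finally show ?thesis .
qed

lemma (in prob_space) std_abs_ge:
  assumes Z: "distributed M lborel Z std_normal_density"
  assumes c: "0 < c"
  shows "measure M {y\<in>space M. \<bar>Z y\<bar> \<ge> c} \<le> 2 * Phi (- c)"
proof -
  have m[measurable]: "Z \<in> borel_measurable M" using Z by (simp add: distributed_def)
  have "{y\<in>space M. \<bar>Z y\<bar> \<ge> c} = {y\<in>space M. Z y \<le> - c} \<union> {y\<in>space M. Z y \<ge> c}"
    by auto
  then have "measure M {y\<in>space M. \<bar>Z y\<bar> \<ge> c} \<le> measure M {y\<in>space M. Z y \<le> - c} + measure M {y\<in>space M. Z y \<ge> c}"
    using measure_subadditive[of "{y\<in>space M. Z y \<le> - c}" M "{y\<in>space M. Z y \<ge> c}"] by simp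
  also have "\<dots> = 2 * Phi (- c)" using std_le[OF Z] std_ge[OF Z] by simp
  finally show ?thesis .
qed


lemma fun_sum_apply: "finite A \<Longrightarrow> (\<Sum>j\<in>A. f j) (i::nat) = (\<Sum>j\<in>A. (f j i :: real))"
  by (induction A rule: finite_induct) auto

locale adc =
  fixes n L d r Ns pt
  assumes adc: "angle_dense_construction n L d r Ns pt"
begin

lemma pt_nil: "pt [] = origin n" using adc unfolding angle_dense_construction_def by simp

lemma adcD: "l < L \<Longrightarrow> s \<in> idx Ns l \<Longrightarrow> t < Ns (l + 1) \<Longrightarrow>
   pt (s @ [t]) \<in> Rn n \<and> norm_n n (pt (s @ [t]) - pt s) = r (l + 1) \<and>
   (\<forall>j\<in>{1..l}. inner_n n (path_vec pt s j) (pt (s @ [t]) - pt s) = 0)"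
  using adc unfolding angle_dense_construction_def by blast

lemma adc_dense: "l < L \<Longrightarrow> s \<in> idx Ns l \<Longrightarrow>
   angle_dense n d (pt s) (Ns (l + 1)) (\<lambda>t. pt (s @ [t]))"
  using adc unfolding angle_dense_construction_def by blast

lemma idx_take: "s \<in> idx Ns L \<Longrightarrow> l \<le> L \<Longrightarrow> take l s \<in> idx Ns l"
  unfolding idx_def by auto

lemma idx_nth: "s \<in> idx Ns L \<Longrightarrow> k < L \<Longrightarrow> s ! k < Ns (k + 1)"
  unfolding idx_def by auto

lemma idx_len: "s \<in> idx Ns L \<Longrightarrow> length s = L"
  unfolding idx_def by auto

lemma take_snoc: "s \<in> idx Ns L \<Longrightarrow> k < L \<Longrightarrow> take (Suc k) s = take k s @ [s ! k]"
  using idx_len by (simp add: take_Suc_conv_app_nth)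

lemma pv_Suc: "s \<in> idx Ns L \<Longrightarrow> k < L \<Longrightarrow>
  path_vec pt s (Suc k) = pt (take k s @ [s ! k]) - pt (take k s)"
  unfolding path_vec_def using take_snoc by simp

lemma pv_norm: assumes "s \<in> idx Ns L" "l \<in> {1..L}" shows "norm_n n (path_vec pt s l) = r l"
proof -
  obtain k where k: "l = Suc k" "k < L" using assms(2) by (cases l) auto
  show ?thesis using adcD[OF k(2) idx_take[OF assms(1)] idx_nth[OF assms(1) k(2)]] k pv_Suc[OF assms(1) k(2)]
    by simp
qed

lemma pv_take: "j \<le> k \<Longrightarrow> path_vec pt (take k s) j = path_vec pt s j"
  unfolding path_vec_def by (simp add: min.absorb1)

lemma pv_orth: assumes "s \<in> idx Ns L" "1 \<le> j" "j < m" "m \<le> L"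
  shows "inner_n n (path_vec pt s j) (path_vec pt s m) = 0"
proof -
  obtain k where k: "m = Suc k" "k < L" using assms by (cases m) auto
  have "inner_n n (path_vec pt (take k s) j) (pt (take k s @ [s ! k]) - pt (take k s)) = 0"
    using adcD[OF k(2) idx_take[OF assms(1)] idx_nth[OF assms(1) k(2)]] k assms by auto
  then show ?thesis using pv_Suc[OF assms(1) k(2)] pv_take[of j k s] k assms by simp
qed

lemma pv_orth': assumes "s \<in> idx Ns L" "j \<in> {1..L}" "m \<in> {1..L}" "j \<noteq> m"
  shows "inner_n n (path_vec pt s j) (path_vec pt s m) = 0"
  using pv_orth[OF assms(1), of j m] pv_orth[OF assms(1), of m j] assms
  by (cases "j < m") (auto simp: inner_n_commute)

lemma pt_tele: assumes "s \<in> idx Ns L" "l \<le> L" "i < n"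
  shows "pt (take l s) i = (\<Sum>j\<in>{1..l}. path_vec pt s j i)"
  using assms(2)
proof (induction l)
  case 0
  then show ?case using pt_nil assms(3) by (simp add: origin_def)
next
  case (Suc l)
  have "path_vec pt s (Suc l) i = pt (take (Suc l) s) i - pt (take l s) i"
    unfolding path_vec_def by simp
  then show ?case using Suc by simp
qed

lemma tail_apply: assumes "s \<in> idx Ns L" "l \<le> L" "i < n"
  shows "(pt s - pt (take l s)) i = (\<Sum>j\<in>{l<..L}. path_vec pt s j) i"
proof -
  have sL: "take L s = s" using idx_len[OF assms(1)] by simp
  have "{1..L} = {1..l} \<union> {l<..L}" using assms(2) by auto
  then have "(\<Sum>j\<in>{1..L}. path_vec pt s j i) = (\<Sum>j\<in>{1..l}. path_vec pt s j i) + (\<Sum>j\<in>{l<..L}. path_vec pt s j i)"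
    by (simp add: sum.union_disjoint ivl_disj_int)
  then show ?thesis
    using pt_tele[OF assms(1) order.refl assms(3)] pt_tele[OF assms] sL
    by (simp add: fun_sum_apply)
qed

lemma inner_tail: assumes "s \<in> idx Ns L" "l \<le> L"
  shows "inner_n n (pt s - pt (take l s)) y = (\<Sum>j\<in>{l<..L}. inner_n n (path_vec pt s j) y)"
proof -
  have "inner_n n (pt s - pt (take l s)) y = inner_n n (\<Sum>j\<in>{l<..L}. path_vec pt s j) y"
    by (rule inner_n_cong) (use tail_apply[OF assms] in auto)
  then show ?thesis by (simp add: inner_n_sum1)
qed

lemma tail_orth: assumes "s \<in> idx Ns L" "l \<in> {1..L}"
  shows "inner_n n (pt s - pt (take l s)) (path_vec pt s l) = 0"
  using assms by (subst inner_tail) (auto intro!: sum.neutral pv_orth')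

lemma tail_norm_sq: assumes "s \<in> idx Ns L" "l \<le> L"
  shows "(norm_n n (pt s - pt (take l s)))\<^sup>2 = (\<Sum>j\<in>{l<..L}. (r j)\<^sup>2)"
proof -
  have "(norm_n n (pt s - pt (take l s)))\<^sup>2 = (\<Sum>j\<in>{l<..L}. inner_n n (path_vec pt s j) (pt s - pt (take l s)))"
    by (simp add: norm_n_sq inner_tail[OF assms])
  also have "\<dots> = (\<Sum>j\<in>{l<..L}. (r j)\<^sup>2)"
  proof (rule sum.cong[OF refl])
    fix j assume j: "j \<in> {l<..L}"
    have "inner_n n (path_vec pt s j) (pt s - pt (take l s)) = inner_n n (pt s - pt (take l s)) (path_vec pt s j)"
      by (rule inner_n_commute)
    also have "\<dots> = (\<Sum>k\<in>{l<..L}. inner_n n (path_vec pt s k) (path_vec pt s j))"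
      by (rule inner_tail[OF assms])
    also have "\<dots> = inner_n n (path_vec pt s j) (path_vec pt s j)"
    proof -
      have "(\<Sum>k\<in>{l<..L}. inner_n n (path_vec pt s k) (path_vec pt s j))
        = inner_n n (path_vec pt s j) (path_vec pt s j) + (\<Sum>k\<in>{l<..L} - {j}. inner_n n (path_vec pt s k) (path_vec pt s j))"
        using j by (subst sum.remove[of _ j]) auto
      also have "(\<Sum>k\<in>{l<..L} - {j}. inner_n n (path_vec pt s k) (path_vec pt s j)) = 0"
        using j by (intro sum.neutral) (auto intro!: pv_orth'[OF assms(1)])
      finally show ?thesis by simp
    qed
    also have "\<dots> = (r j)\<^sup>2" using pv_norm[OF assms(1), of j] j by (simp add: norm_n_sq[symmetric])
    finally show "inner_n n (path_vec pt s j) (pt s - pt (take l s)) = (r j)\<^sup>2" .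
  qed
  finally show ?thesis .
qed

end


lemma first_diff: "length s = length s' \<Longrightarrow> s \<noteq> s' \<Longrightarrow> \<exists>k<length s. take k s = take k s' \<and> s ! k \<noteq> s' ! k"
proof (induction s arbitrary: s')
  case Nil then show ?case by simp
next
  case (Cons x xs)
  then obtain y ys where s': "s' = y # ys" by (cases s') auto
  show ?case
  proof (cases "x = y")
    case True
    then have "xs \<noteq> ys" "length xs = length ys" using Cons s' by auto
    then obtain k where "k < length xs" "take k xs = take k ys" "xs ! k \<noteq> ys ! k" using Cons.IH by blast
    then show ?thesis using True s' by (intro exI[of _ "Suc k"]) auto
  next
    case False then show ?thesis using s' by (intro exI[of _ 0]) auto
  qed
qed

lemma meas_inner[measurable]: "(\<lambda>y. inner_n n (y - p) v) \<in> borel_measurable (gauss_out n \<sigma> x)"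
proof -
  have eq: "(\<lambda>y. inner_n n (y - p) v) = (\<lambda>y. \<Sum>i<n. (y i - p i) * v i)" by (simp add: inner_n_def)
  show ?thesis unfolding eq gauss_out_def by measurable
qed

lemma inner_split: "inner_n n (y - A) v = inner_n n (y - u) v + inner_n n (u - A) v"
  unfolding inner_n_def by (simp add: algebra_simps sum.distrib[symmetric])

lemma unit_vec: assumes "norm_n n a = r" "r > 0"
  shows "(\<Sum>i<n. ((\<lambda>i. 1 / r * a i) i)\<^sup>2) = 1"
proof -
  have "(\<Sum>i<n. ((\<lambda>i. 1 / r * a i) i)\<^sup>2) = inner_n n (\<lambda>i. 1 / r * a i) (\<lambda>i. 1 / r * a i)"
    unfolding inner_n_def by (simp add: power2_eq_square)
  also have "\<dots> = 1 / r * (1 / r * inner_n n a a)"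
    by (simp only: inner_n_scale1 inner_n_scale2)
  also have "\<dots> = 1 / r\<^sup>2 * (norm_n n a)\<^sup>2"
    by (simp add: norm_n_sq[symmetric] power2_eq_square)
  finally show ?thesis using assms by simp
qed

lemma gauss_Z: assumes "norm_n n a = r" "r > 0" "\<sigma> > 0"
  shows "distributed (gauss_out n \<sigma> x) lborel (\<lambda>y. inner_n n (y - x) a / r / \<sigma>) std_normal_density"
proof -
  have "distributed (gauss_out n \<sigma> x) lborel (\<lambda>y. inner_n n (y - x) (\<lambda>i. 1 / r * a i) / \<sigma>) std_normal_density"
    by (rule gauss_proj[OF assms(3) unit_vec[OF assms(1,2)]])
  moreover have "(\<lambda>y. inner_n n (y - x) (\<lambda>i. 1 / r * a i) / \<sigma>) = (\<lambda>y. inner_n n (y - x) a / r / \<sigma>)"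
    by (simp only: inner_n_scale2) simp
  ultimately show ?thesis by simp
qed

context adc
begin

lemma norm_pt: assumes "s \<in> idx Ns L" shows "(norm_n n (pt s))\<^sup>2 = (\<Sum>j\<in>{1..L}. (r j)\<^sup>2)"
proof -
  have "norm_n n (pt s) = norm_n n (pt s - pt (take 0 s))"
    unfolding norm_n_def by (intro arg_cong[where f=sqrt] inner_n_cong) (auto simp: pt_nil origin_def)
  moreover have "{0<..L} = {1..L}" by auto
  ultimately show ?thesis using tail_norm_sq[OF assms, of 0] by simp
qed

lemma finite_idx: "finite (idx Ns L)"
proof -
  define M where "M = Max (Ns ` {1..L})"
  have "idx Ns L \<subseteq> {xs. set xs \<subseteq> {..M} \<and> length xs = L}"
  proof
    fix s assume s: "s \<in> idx Ns L"
    have "\<forall>x\<in>set s. x \<le> M"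
    proof
      fix x assume "x \<in> set s"
      then obtain j where j: "j < length s" "s ! j = x" by (auto simp: in_set_conv_nth)
      then have "x < Ns (j + 1)" "j + 1 \<in> {1..L}" using s unfolding idx_def by auto
      moreover have "Ns (j + 1) \<le> M" unfolding M_def using \<open>j + 1 \<in> {1..L}\<close> by (intro Max_ge) auto
      ultimately show "x \<le> M" by simp
    qed
    then show "s \<in> {xs. set xs \<subseteq> {..M} \<and> length xs = L}" using s unfolding idx_def by auto
  qed
  moreover have "finite {xs. set xs \<subseteq> {..M} \<and> length xs = L}"
    by (rule finite_lists_length_eq) simp
  ultimately show ?thesis by (rule finite_subset)
qed

lemma pt_Rn: assumes "s \<in> idx Ns L" shows "pt s \<in> Rn n"
proof (cases L)
  case 0
  then have "s = []" using idx_len[OF assms] by simp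
  then show ?thesis by (simp add: pt_nil origin_def Rn_def)
next
  case (Suc k)
  then have "s = take k s @ [s ! k]" using take_snoc[OF assms, of k] idx_len[OF assms] by simp
  then show ?thesis using adcD[OF _ idx_take[OF assms] idx_nth[OF assms], of k] Suc by (metis lessI order_less_imp_le)
qed


lemma dec_eq: "decoding_set n L pt s = {y \<in> space (gauss_out n \<sigma> x). \<forall>l\<in>{1..L}.
   \<bar>inner_n n (y - pt (take l s)) (path_vec pt s l)\<bar> / norm_n n (path_vec pt s l) \<le> log 2 (real n)}"
  unfolding decoding_set_def space_gauss by simp

lemma dec_sets: "decoding_set n L pt s \<in> sets (gauss_out n \<sigma> x)"
  unfolding dec_eq[where \<sigma>=\<sigma> and x=x and s=s] by measurable

lemma typeI:
  assumes s: "s \<in> idx Ns L" and \<sigma>: "\<sigma> > 0" and t: "t > 0" "t = log 2 (real n)"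
    and rpos: "\<forall>l\<in>{1..L}. r l > 0"
  shows "measure (gauss_out n \<sigma> (pt s)) (decoding_set n L pt s) \<ge> 1 - real L * (2 * Phi (- t / \<sigma>))"
proof -
  let ?M = "gauss_out n \<sigma> (pt s)"
  interpret M: prob_space ?M by (rule gauss_prob[OF \<sigma>])
  define Z where "Z = (\<lambda>l y. inner_n n (y - pt s) (path_vec pt s l) / r l / \<sigma>)"
  let ?D = "decoding_set n L pt s"
  let ?B = "\<lambda>l. {y \<in> space ?M. t / \<sigma> \<le> \<bar>Z l y\<bar>}"
  have Bm: "?B l \<in> sets ?M" for l unfolding Z_def by measurable
  have sub: "space ?M - ?D \<subseteq> (\<Union>l\<in>{1..L}. ?B l)"
  proof
    fix y assume y: "y \<in> space ?M - ?D"
    then obtain l where l: "l \<in> {1..L}" and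
      gt: "\<not> \<bar>inner_n n (y - pt (take l s)) (path_vec pt s l)\<bar> / norm_n n (path_vec pt s l) \<le> log 2 (real n)"
      unfolding dec_eq[where \<sigma>=\<sigma> and x="pt s" and s=s] by auto
    have "inner_n n (y - pt (take l s)) (path_vec pt s l) = inner_n n (y - pt s) (path_vec pt s l)"
      using inner_split[of n y "pt (take l s)" "path_vec pt s l" "pt s"] tail_orth[OF s l] by simp
    moreover have rl: "norm_n n (path_vec pt s l) = r l" "r l > 0" using pv_norm[OF s l] rpos l by auto
    ultimately have "t < \<bar>inner_n n (y - pt s) (path_vec pt s l)\<bar> / r l" using gt t by simp
    then have A: "t / \<sigma> \<le> (\<bar>inner_n n (y - pt s) (path_vec pt s l)\<bar> / r l) / \<sigma>"
      using \<sigma> by (intro divide_right_mono) auto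
    have "\<bar>Z l y\<bar> = (\<bar>inner_n n (y - pt s) (path_vec pt s l)\<bar> / r l) / \<sigma>"
      unfolding Z_def using \<sigma> rl(2) by (simp add: abs_div)
    then have "t / \<sigma> \<le> \<bar>Z l y\<bar>" using A by simp
    then show "y \<in> (\<Union>l\<in>{1..L}. ?B l)" using l y by auto
  qed
  have "M.prob (space ?M - ?D) \<le> M.prob (\<Union>l\<in>{1..L}. ?B l)"
    using sub Bm by (intro M.finite_measure_mono) auto
  also have "\<dots> \<le> (\<Sum>l\<in>{1..L}. M.prob (?B l))"
    using Bm by (intro measure_subadditive_finite) auto
  also have "\<dots> \<le> (\<Sum>l\<in>{1..L}. 2 * Phi (- (t / \<sigma>)))"
  proof (rule sum_mono)
    fix l assume l: "l \<in> {1..L}"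
    have "distributed ?M lborel (Z l) std_normal_density"
      unfolding Z_def by (rule gauss_Z) (use pv_norm[OF s l] rpos l \<sigma> in auto)
    then show "M.prob (?B l) \<le> 2 * Phi (- (t / \<sigma>))"
      by (rule M.std_abs_ge) (use t \<sigma> in simp)
  qed
  also have "\<dots> = real L * (2 * Phi (- t / \<sigma>))" by simp
  finally have "M.prob (space ?M - ?D) \<le> real L * (2 * Phi (- t / \<sigma>))" .
  moreover have "M.prob (space ?M - ?D) = 1 - M.prob ?D"
    by (rule M.prob_compl) (rule dec_sets)
  ultimately show ?thesis by simp
qed


lemma typeII:
  assumes s: "s \<in> idx Ns L" and s': "s' \<in> idx Ns L" and ne: "s \<noteq> s'"
    and \<sigma>: "\<sigma> > 0" and d: "d = 3 * t" and t: "t > 0" "t \<ge> 6 * real L" "t = log 2 (real n)"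
    and rpos: "\<forall>l\<in>{1..L}. r l > 0"
    and rtail: "\<forall>l\<in>{1..L}. (\<Sum>j\<in>{l<..L}. (r j)\<^sup>2) \<le> real L * r l"
  shows "measure (gauss_out n \<sigma> (pt s')) (decoding_set n L pt s) \<le> 2 * Phi (- t / \<sigma>)"
proof -
  let ?M = "gauss_out n \<sigma> (pt s')"
  interpret M: prob_space ?M by (rule gauss_prob[OF \<sigma>])
  obtain k where k: "k < L" "take k s = take k s'" "s ! k \<noteq> s' ! k"
    using first_diff[of s s'] idx_len[OF s] idx_len[OF s'] ne by auto
  define l where "l = Suc k"
  have l: "l \<in> {1..L}" using k unfolding l_def by auto
  define a where "a = path_vec pt s l"
  define a' where "a' = path_vec pt s' l"
  define w where "w = pt s' - pt (take l s')"
  have rl: "r l > 0" using rpos l by auto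
  have na: "norm_n n a = r l" unfolding a_def by (rule pv_norm[OF s l])
  have na': "norm_n n a' = r l" unfolding a'_def by (rule pv_norm[OF s' l])
  have wa': "inner_n n w a' = 0" unfolding w_def a'_def by (rule tail_orth[OF s' l])
  have nw: "(norm_n n w)\<^sup>2 \<le> real L * r l"
    unfolding w_def using tail_norm_sq[OF s', of l] l rtail by auto
  have ea: "a = pt (take k s @ [s ! k]) - pt (take k s)"
    unfolding a_def l_def by (rule pv_Suc[OF s k(1)])
  have ea': "a' = pt (take k s @ [s' ! k]) - pt (take k s)"
    unfolding a'_def l_def k(2) by (rule pv_Suc[OF s' k(1)])
  have "angle_dense n d (pt (take k s)) (Ns (k + 1)) (\<lambda>t. pt (take k s @ [t]))"
    by (rule adc_dense[OF k(1) idx_take[OF s]]) (use k in simp)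
  then have AD: "\<And>j k'. j < Ns (k + 1) \<Longrightarrow> k' < Ns (k + 1) \<Longrightarrow> j \<noteq> k' \<Longrightarrow>
     d \<le> norm_n n (proj_n n (pt (take k s @ [k']) - pt (take k s)) (pt (take k s @ [j]) - pt (take k s)) - (pt (take k s @ [k']) - pt (take k s)))"
    unfolding angle_dense_def by blast
  have "norm_n n (proj_n n a a' - a) \<ge> d"
    unfolding ea ea' by (rule AD[OF idx_nth[OF s' k(1)] idx_nth[OF s k(1)]]) (use k(3) in auto)
  then have sep: "\<bar>inner_n n w a + inner_n n a' a - inner_n n a a\<bar> \<ge> 2 * r l * t"
    using sep_vec[OF rl na na' wa' nw _ t(2,1)] d by simp
  define A where "A = pt (take l s)"
  define \<mu> where "\<mu> = inner_n n (pt s' - A) a"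
  have "\<mu> = inner_n n (\<lambda>i. w i + a' i - a i) a"
    unfolding \<mu>_def
  proof (rule inner_n_cong)
    fix i assume "i < n"
    show "(pt s' - A) i = w i + a' i - a i"
      unfolding w_def a'_def a_def A_def path_vec_def l_def using k(2) by simp
  qed simp
  also have "\<dots> = inner_n n w a + inner_n n a' a - inner_n n a a"
  proof -
    have "inner_n n (\<lambda>i. w i + a' i - a i) a = (\<Sum>i<n. w i * a i + a' i * a i - a i * a i)"
      unfolding inner_n_def by (simp add: algebra_simps)
    also have "\<dots> = inner_n n w a + inner_n n a' a - inner_n n a a"
      unfolding inner_n_def by (simp only: sum.distrib sum_subtractf)
    finally show ?thesis .
  qed
  finally have mu: "\<bar>\<mu>\<bar> \<ge> 2 * r l * t" using sep by simp
  define Z where "Z = (\<lambda>y. inner_n n (y - pt s') a / r l / \<sigma>)"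
  let ?B = "{y \<in> space ?M. t / \<sigma> \<le> \<bar>Z y\<bar>}"
  have Bm: "?B \<in> sets ?M" unfolding Z_def by measurable
  have sub: "decoding_set n L pt s \<subseteq> ?B"
  proof
    fix y assume y: "y \<in> decoding_set n L pt s"
    then have ysp: "y \<in> space ?M" and "\<bar>inner_n n (y - A) a\<bar> / norm_n n a \<le> t"
      unfolding dec_eq[where \<sigma>=\<sigma> and x="pt s'" and s=s] A_def a_def using l t(3) by auto
    then have "\<bar>inner_n n (y - A) a\<bar> \<le> t * r l" using na rl by (simp add: divide_le_eq)
    moreover have "inner_n n (y - A) a = inner_n n (y - pt s') a + \<mu>"
      unfolding \<mu>_def by (rule inner_split)
    moreover have "2 * r l * t = 2 * (t * r l)" by simp
    ultimately have "\<bar>inner_n n (y - pt s') a\<bar> \<ge> t * r l" using mu by arith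
    then have "\<bar>inner_n n (y - pt s') a\<bar> / r l \<ge> t" using rl by (simp add: le_divide_eq)
    then have A: "t / \<sigma> \<le> (\<bar>inner_n n (y - pt s') a\<bar> / r l) / \<sigma>"
      using \<sigma> by (intro divide_right_mono) auto
    have "\<bar>Z y\<bar> = (\<bar>inner_n n (y - pt s') a\<bar> / r l) / \<sigma>"
      unfolding Z_def using \<sigma> rl by (simp add: abs_div)
    then show "y \<in> ?B" using A ysp by simp
  qed
  have "M.prob (decoding_set n L pt s) \<le> M.prob ?B"
    using sub Bm by (intro M.finite_measure_mono) auto
  also have "\<dots> \<le> 2 * Phi (- (t / \<sigma>))"
  proof -
    have "distributed ?M lborel Z std_normal_density"
      unfolding Z_def by (rule gauss_Z) (use na rl \<sigma> in auto)
    then show ?thesis by (rule M.std_abs_ge) (use t \<sigma> in simp)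
  qed
  finally show ?thesis by simp
qed

lemma DI_main:
  assumes \<sigma>: "\<sigma> > 0" and d: "d = 3 * t" and t: "t > 0" "t \<ge> 6 * real L" "t = log 2 (real n)"
    and rpos: "\<forall>l\<in>{1..L}. r l > 0"
    and rtail: "\<forall>l\<in>{1..L}. (\<Sum>j\<in>{l<..L}. (r j)\<^sup>2) \<le> real L * r l"
    and pow: "(\<Sum>j\<in>{1..L}. (r j)\<^sup>2) \<le> real n * P"
  shows "(\<forall>s\<in>idx Ns L. (norm_n n (pt s))\<^sup>2 \<le> real n * P) \<and>
    DI_code n P \<sigma> (idx Ns L) pt (decoding_set n L pt) (real L * (2 * Phi (- t / \<sigma>))) (2 * Phi (- t / \<sigma>))"
proof -
  have nP: "\<forall>s\<in>idx Ns L. (norm_n n (pt s))\<^sup>2 \<le> real n * P" using norm_pt pow by simp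
  show ?thesis unfolding DI_code_def
  proof (intro conjI ballI impI)
    show "finite (idx Ns L)" by (rule finite_idx)
  next
    fix s assume "s \<in> idx Ns L"
    then show "pt s \<in> Rn n" "(norm_n n (pt s))\<^sup>2 \<le> real n * P" using pt_Rn nP by auto
  next
    fix s assume "s \<in> idx Ns L"
    show "decoding_set n L pt s \<in> sets (gauss_out n \<sigma> (pt s))" by (rule dec_sets)
  next
    fix s assume "s \<in> idx Ns L"
    then show "measure (gauss_out n \<sigma> (pt s)) (decoding_set n L pt s) \<ge> 1 - real L * (2 * Phi (- t / \<sigma>))"
      by (rule typeI[OF _ \<sigma> t(1) t(3) rpos])
  next
    fix s s' assume "s \<in> idx Ns L" "s' \<in> idx Ns L" "s \<noteq> s'"
    then show "measure (gauss_out n \<sigma> (pt s')) (decoding_set n L pt s) \<le> 2 * Phi (- t / \<sigma>)"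
      by (rule typeII[OF _ _ _ \<sigma> d t rpos rtail])
  qed (use nP in auto)
qed

end


lemma gv_greedy:
  assumes "finite A" and refl: "\<And>x. x \<in> A \<Longrightarrow> R x x" and sym: "\<And>x y. R x y \<Longrightarrow> R y x"
    and nb: "\<And>x. x \<in> A \<Longrightarrow> card {y\<in>A. R x y} \<le> B"
  shows "\<exists>S\<subseteq>A. card A \<le> card S * B \<and> (\<forall>x\<in>S. \<forall>y\<in>S. x \<noteq> y \<longrightarrow> \<not> R x y)"
  using assms(1) nb refl
proof (induction "card A" arbitrary: A rule: less_induct)
  case less
  show ?case
  proof (cases "A = {}")
    case True then show ?thesis by auto
  next
    case False
    then obtain x where x: "x \<in> A" by auto
    define N where "N = {y\<in>A. R x y}"
    define A' where "A' = A - N"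
    have xN: "x \<in> N" unfolding N_def using x less(4) by auto
    have fA': "finite A'" unfolding A'_def using less by auto
    have lt: "card A' < card A" unfolding A'_def using xN less(2) N_def
      by (intro psubset_card_mono) auto
    have nb': "card {y\<in>A'. R z y} \<le> B" if "z \<in> A'" for z
    proof -
      have "card {y\<in>A'. R z y} \<le> card {y\<in>A. R z y}"
        using less(2) unfolding A'_def by (intro card_mono) auto
      then show ?thesis using less(3)[of z] that unfolding A'_def by auto
    qed
    have rf': "R z z" if "z \<in> A'" for z using less(4) that unfolding A'_def by auto
    obtain S' where S': "S' \<subseteq> A'" "card A' \<le> card S' * B" "\<forall>u\<in>S'. \<forall>v\<in>S'. u \<noteq> v \<longrightarrow> \<not> R u v"
      using less(1)[OF lt fA' nb' rf'] by blast
    define S where "S = insert x S'"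
    have xS': "x \<notin> S'" using S'(1) xN unfolding A'_def by auto
    have fS': "finite S'" using S'(1) fA' by (rule finite_subset)
    have "card A = card A' + card N"
      unfolding A'_def using less(2) by (metis N_def card_Diff_subset_Int card_mono mem_Collect_eq subsetI Int_absorb1 le_add_diff_inverse2 finite_subset)
    also have "\<dots> \<le> card S' * B + B" using S'(2) less(3)[OF x] unfolding N_def by simp
    also have "\<dots> = card S * B" unfolding S_def using xS' fS' by simp
    finally have c: "card A \<le> card S * B" .
    have "\<forall>u\<in>S. \<forall>v\<in>S. u \<noteq> v \<longrightarrow> \<not> R u v"
    proof (intro ballI impI)
      fix u v assume "u \<in> S" "v \<in> S" "u \<noteq> v"
      moreover have "\<And>v. v \<in> S' \<Longrightarrow> \<not> R x v" using S'(1) unfolding A'_def N_def by auto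
      ultimately show "\<not> R u v" using S'(3) sym unfolding S_def by blast
    qed
    moreover have "S \<subseteq> A" unfolding S_def using S'(1) x unfolding A'_def by auto
    ultimately show ?thesis using c by blast
  qed
qed

lemma geom_int: "(\<Sum>j\<in>{- int M..int M}. (1/2::real) ^ nat \<bar>j\<bar>) = 3 - 2 * (1/2) ^ M"
proof (induction M)
  case 0 then show ?case by simp
next
  case (Suc M)
  have "{- int (Suc M)..int (Suc M)} = insert (- int (Suc M)) (insert (int (Suc M)) {- int M..int M})"
    by auto
  moreover have "nat \<bar>- int (Suc M)\<bar> = Suc M" "nat \<bar>int (Suc M)\<bar> = Suc M" by auto
  ultimately have "(\<Sum>j\<in>{- int (Suc M)..int (Suc M)}. (1/2::real) ^ nat \<bar>j\<bar>)
     = (1/2) ^ Suc M + ((1/2) ^ Suc M + (\<Sum>j\<in>{- int M..int M}. (1/2::real) ^ nat \<bar>j\<bar>))"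
    by (simp only:) (subst sum.insert, simp, simp, subst sum.insert, simp_all)
  then show ?case using Suc by simp
qed

lemma int_abs_le_sq: "\<bar>x::int\<bar> \<le> x\<^sup>2"
proof (cases "x = 0")
  case False
  then have "\<bar>x\<bar> * 1 \<le> \<bar>x\<bar> * \<bar>x\<bar>" by (intro mult_left_mono) auto
  then show ?thesis by (simp add: power2_eq_square abs_mult_self_eq)
qed simp

lemma nbr_count:
  "card {z \<in> PiE {..<m} (\<lambda>_. {- int M..int M}). (\<Sum>i<m. (z i)\<^sup>2) < int m} \<le> 6 ^ m"
proof -
  define P where "P = PiE {..<m} (\<lambda>_. {- int M..int M})"
  define Z where "Z = {z \<in> P. (\<Sum>i<m. (z i)\<^sup>2) < int m}"
  define w where "w = (\<lambda>z. (2::real) ^ m * (\<Prod>i<m. (1/2::real) ^ nat \<bar>z i\<bar>))"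
  have fP: "finite P" unfolding P_def by (intro finite_PiE) auto
  have ZP: "Z \<subseteq> P" unfolding Z_def by auto
  have "real (card Z) = (\<Sum>z\<in>Z. (1::real))" by simp
  also have "\<dots> \<le> (\<Sum>z\<in>Z. w z)"
  proof (rule sum_mono)
    fix z assume z: "z \<in> Z"
    have "int (\<Sum>i<m. nat \<bar>z i\<bar>) = (\<Sum>i<m. \<bar>z i\<bar>)" by simp
    also have "\<dots> \<le> (\<Sum>i<m. (z i)\<^sup>2)"
    proof (rule sum_mono)
      fix i
      show "\<bar>z i\<bar> \<le> (z i)\<^sup>2" by (rule int_abs_le_sq)
    qed
    finally have "int (\<Sum>i<m. nat \<bar>z i\<bar>) \<le> int m" using z unfolding Z_def by auto
    then have "(\<Sum>i<m. nat \<bar>z i\<bar>) \<le> m" by (simp only: of_nat_le_iff)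
    then have "(1/2::real) ^ m \<le> (1/2) ^ (\<Sum>i<m. nat \<bar>z i\<bar>)"
      by (intro power_decreasing) auto
    also have "\<dots> = (\<Prod>i<m. (1/2::real) ^ nat \<bar>z i\<bar>)" by (rule power_sum)
    finally have "(2::real) ^ m * (1/2) ^ m \<le> w z" unfolding w_def by (intro mult_left_mono) auto
    then show "1 \<le> w z" by (simp add: power_one_over)
  qed
  also have "\<dots> \<le> (\<Sum>z\<in>P. w z)"
    by (rule sum_mono2[OF fP ZP]) (unfold w_def, intro mult_nonneg_nonneg prod_nonneg, auto)
  also have "\<dots> = 2 ^ m * (\<Prod>i<m. \<Sum>j\<in>{- int M..int M}. (1/2::real) ^ nat \<bar>j\<bar>)"
    unfolding w_def P_def by (subst prod_sum_PiE) (auto simp: sum_distrib_left)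
  also have "\<dots> \<le> 2 ^ m * 3 ^ m"
  proof -
    have "(\<Prod>i<m. \<Sum>j\<in>{- int M..int M}. (1/2::real) ^ nat \<bar>j\<bar>) \<le> (\<Prod>i<m. 3)"
      using power_le_one[of "1/2::real" M] by (intro prod_mono) (auto simp: geom_int intro!: sum_nonneg)
    then show ?thesis by simp
  qed
  also have "\<dots> = 6 ^ m" by (simp add: power_mult_distrib[symmetric])
  finally have "real (card Z) \<le> 6 ^ m" .
  then show ?thesis unfolding Z_def P_def by (simp add: of_nat_le_iff[symmetric])
qed

lemma code_exists:
  assumes m: "m > 0"
  shows "\<exists>S\<subseteq>PiE {..<m} (\<lambda>_. {- int K..int K}). (2 * K + 1) ^ m \<le> card S * 6 ^ m \<and>
     (\<forall>k\<in>S. \<forall>k'\<in>S. k \<noteq> k' \<longrightarrow> int m \<le> (\<Sum>i<m. (k i - k' i)\<^sup>2))"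
proof -
  define G where "G = PiE {..<m} (\<lambda>_. {- int K..int K})"
  define R where "R = (\<lambda>k k'. (\<Sum>i<m. (k i - k' i)\<^sup>2) < int m)"
  have fG: "finite G" unfolding G_def by (intro finite_PiE) auto
  have cG: "card G = (2 * K + 1) ^ m" unfolding G_def
    by (subst card_PiE) (auto simp: nat_add_distrib nat_mult_distrib)
  have refl: "R k k" for k unfolding R_def using m by simp
  have sym: "R k k' \<Longrightarrow> R k' k" for k k'
  proof -
    have "(\<Sum>i<m. (k i - k' i)\<^sup>2) = (\<Sum>i<m. (k' i - k i)\<^sup>2)"
      by (intro sum.cong) (auto simp: power2_commute)
    then show "R k k' \<Longrightarrow> R k' k" unfolding R_def by simp
  qed
  have nb: "card {k'\<in>G. R k k'} \<le> 6 ^ m" if k: "k \<in> G" for k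
  proof -
    define Z where "Z = {z \<in> PiE {..<m} (\<lambda>_. {- int (2 * K)..int (2 * K)}). (\<Sum>i<m. (z i)\<^sup>2) < int m}"
    define f where "f = (\<lambda>k'. \<lambda>i\<in>{..<m}. k' i - k i)"
    have "inj_on f {k'\<in>G. R k k'}"
    proof (rule inj_onI)
      fix x y assume x: "x \<in> {k'\<in>G. R k k'}" and y: "y \<in> {k'\<in>G. R k k'}" and e: "f x = f y"
      have "\<forall>i<m. x i = y i"
      proof (intro allI impI)
        fix i assume "i < m"
        then show "x i = y i" using fun_cong[OF e, of i] unfolding f_def by simp
      qed
      moreover have "x \<in> G" "y \<in> G" using x y by auto
      ultimately show "x = y" unfolding G_def by (intro PiE_ext[of x "{..<m}" _ y]) auto
    qed
    moreover have "f ` {k'\<in>G. R k k'} \<subseteq> Z"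
    proof
      fix z assume "z \<in> f ` {k'\<in>G. R k k'}"
      then obtain k' where k': "k' \<in> G" "R k k'" and z: "z = f k'" by auto
      have "z \<in> PiE {..<m} (\<lambda>_. {- int (2 * K)..int (2 * K)})"
        unfolding z f_def using k' k unfolding G_def by (auto simp: PiE_iff) (smt (verit) lessThan_iff)+
      moreover have "(\<Sum>i<m. (z i)\<^sup>2) = (\<Sum>i<m. (k i - k' i)\<^sup>2)"
        unfolding z f_def by (intro sum.cong) (auto simp: power2_commute)
      ultimately show "z \<in> Z" using k'(2) unfolding Z_def R_def by auto
    qed
    moreover have "finite Z" unfolding Z_def by (rule finite_subset[of _ "PiE {..<m} (\<lambda>_. {- int (2 * K)..int (2 * K)})"]) (auto intro: finite_PiE)
    ultimately have "card {k'\<in>G. R k k'} \<le> card Z" by (rule card_inj_on_le)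
    also have "card Z \<le> 6 ^ m" unfolding Z_def using nbr_count[of m "2 * K"] by simp
    finally show ?thesis .
  qed
  obtain S where S: "S \<subseteq> G" "card G \<le> card S * 6 ^ m" "\<forall>x\<in>S. \<forall>y\<in>S. x \<noteq> y \<longrightarrow> \<not> R x y"
    using gv_greedy[OF fG refl sym nb] by blast
  have "\<forall>k\<in>S. \<forall>k'\<in>S. k \<noteq> k' \<longrightarrow> int m \<le> (\<Sum>i<m. (k i - k' i)\<^sup>2)"
    using S(3) unfolding R_def by (meson not_less)
  then show ?thesis using S(1,2) unfolding G_def[symmetric] cG by (intro exI[of _ S]) auto
qed


definition hh :: "nat \<Rightarrow> (nat \<Rightarrow> real) \<Rightarrow> (nat \<Rightarrow> real) \<Rightarrow> (nat \<Rightarrow> real)" where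
  "hh n u v = (if inner_n n u u = 0 then v else (\<lambda>i. v i - 2 * inner_n n u v / inner_n n u u * u i))"

lemma inner_lin2: "inner_n n z (\<lambda>i. y i - b * u i) = inner_n n z y - b * inner_n n z u"
  unfolding inner_n_def by (simp add: algebra_simps sum_subtractf sum_distrib_left)

lemma inner_lin1: "inner_n n (\<lambda>i. y i - b * u i) z = inner_n n y z - b * inner_n n u z"
  unfolding inner_n_def by (simp add: algebra_simps sum_subtractf sum_distrib_left)

lemma inner_delta: "p < n \<Longrightarrow> inner_n n c (\<lambda>i. if i = p then 1 else 0) = c p"
proof -
  assume p: "p < n"
  have "inner_n n c (\<lambda>i. if i = p then 1 else 0) = (\<Sum>i<n. if i = p then c i else 0)"
    unfolding inner_n_def by (rule sum.cong) auto
  then show ?thesis using p by simp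
qed

lemma inner_delta': "p < n \<Longrightarrow> inner_n n (\<lambda>i. if i = p then 1 else 0) c = c p"
  using inner_delta[of p n c] by (simp add: inner_n_commute)

lemma inner_comb1: "inner_n n (\<lambda>i. \<alpha> * x i - \<beta> * y i) z = \<alpha> * inner_n n x z - \<beta> * inner_n n y z"
  unfolding inner_n_def by (simp add: algebra_simps sum_subtractf sum_distrib_left)

lemma inner_comb2: "inner_n n (\<lambda>i. \<alpha> * x i - \<beta> * y i) (\<lambda>i. \<alpha> * x i - \<beta> * y i) =
   \<alpha>\<^sup>2 * inner_n n x x - 2 * \<alpha> * \<beta> * inner_n n x y + \<beta>\<^sup>2 * inner_n n y y"
  unfolding inner_n_def by (simp add: algebra_simps sum_subtractf sum.distrib sum_distrib_left power2_eq_square)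

lemma hh_isom: "inner_n n (hh n u x) (hh n u y) = inner_n n x y"
proof (cases "inner_n n u u = 0")
  case False
  define a where "a = 2 * inner_n n u x / inner_n n u u"
  define b where "b = 2 * inner_n n u y / inner_n n u u"
  have "inner_n n (hh n u x) (hh n u y) = inner_n n (\<lambda>i. x i - a * u i) (\<lambda>i. y i - b * u i)"
    using False unfolding hh_def a_def b_def by simp
  also have "\<dots> = inner_n n x y - b * inner_n n x u - a * inner_n n u y + a * b * inner_n n u u"
    unfolding inner_n_def by (simp add: algebra_simps sum.distrib sum_subtractf sum_distrib_left)
  also have "\<dots> = inner_n n x y"
    using False unfolding a_def b_def by (simp add: inner_n_commute[of n x u] field_simps)
  finally show ?thesis .
qed (simp add: hh_def)

lemma hh_selfadj: "inner_n n x (hh n u y) = inner_n n (hh n u x) y"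
proof (cases "inner_n n u u = 0")
  case False
  have hy: "hh n u y = (\<lambda>i. y i - (2 * inner_n n u y / inner_n n u u) * u i)"
    using False by (simp add: hh_def)
  have hx: "hh n u x = (\<lambda>i. x i - (2 * inner_n n u x / inner_n n u u) * u i)"
    using False by (simp add: hh_def)
  have "inner_n n x (hh n u y) = inner_n n x y - 2 * inner_n n u y / inner_n n u u * inner_n n x u"
    unfolding hy inner_lin2 ..
  moreover have "inner_n n (hh n u x) y = inner_n n x y - 2 * inner_n n u x / inner_n n u u * inner_n n u y"
    unfolding hx inner_lin1 ..
  ultimately show ?thesis by (simp add: inner_n_commute[of n x u])
qed (simp add: hh_def)

lemma hh_supp: "(\<And>i. a \<le> i \<Longrightarrow> i < n \<Longrightarrow> u i = 0) \<Longrightarrow> (\<And>i. a \<le> i \<Longrightarrow> i < n \<Longrightarrow> v i = 0) \<Longrightarrow>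
  a \<le> i \<Longrightarrow> i < n \<Longrightarrow> hh n u v i = 0"
  unfolding hh_def by auto

lemma hh_maps:
  assumes cc: "inner_n n c c = r\<^sup>2" and r: "r > 0" and p: "p < n"
    and u: "u = (\<lambda>i. c i / r - (if i = p then 1 else 0))" and i: "i < n"
  shows "hh n u c i = r * (if i = p then 1 else 0)"
proof (cases "inner_n n u u = 0")
  case True
  have "u i = 0" using inner_n_self_zero[OF True, of u] True i unfolding inner_n_def
    by (subst (asm) sum_nonneg_eq_0_iff) auto
  then show ?thesis using True r unfolding hh_def u by (auto simp: field_simps split: if_splits)
next
  case False
  define e where "e = (\<lambda>i::nat. if i = p then 1 else (0::real))"
  have ce: "inner_n n c e = c p" unfolding e_def using p by (rule inner_delta)
  have ee: "inner_n n e e = 1" unfolding e_def using inner_delta[OF p] by simp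
  have u': "u = (\<lambda>i. (1 / r) * c i - 1 * e i)" unfolding u e_def by auto
  have ec: "inner_n n e c = c p" using ce by (simp add: inner_n_commute)
  have uc: "inner_n n u c = r - c p"
  proof -
    have "inner_n n u c = (1 / r) * inner_n n c c - 1 * inner_n n e c"
      unfolding u' by (rule inner_comb1)
    then show ?thesis using cc ec r by (simp add: power2_eq_square)
  qed
  have uu: "inner_n n u u = 2 * (r - c p) / r"
  proof -
    have "inner_n n u u = (1 / r)\<^sup>2 * inner_n n c c - 2 * (1 / r) * 1 * inner_n n c e + 1\<^sup>2 * inner_n n e e"
      unfolding u' by (rule inner_comb2)
    then show ?thesis using cc ce ee r by (simp add: field_simps power2_eq_square)
  qed
  have "r - c p \<noteq> 0" using False uu by auto
  then have k: "2 * inner_n n u c / inner_n n u u = r" unfolding uc uu using r by (simp add: field_simps)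
  show ?thesis using False r unfolding hh_def k by (simp add: u field_simps)
qed


locale cons =
  fixes n L :: nat and C :: "nat \<Rightarrow> nat \<Rightarrow> nat \<Rightarrow> real" and rad :: "nat \<Rightarrow> real"
    and Ns :: "nat \<Rightarrow> nat" and d :: real
  assumes nL: "L < n"
    and rad_pos: "\<And>l. l \<in> {1..L} \<Longrightarrow> rad l > 0"
    and C_norm: "\<And>l t. l \<in> {1..L} \<Longrightarrow> t < Ns l \<Longrightarrow> inner_n n (C l t) (C l t) = (rad l)\<^sup>2"
    and C_supp: "\<And>l t i. l \<in> {1..L} \<Longrightarrow> t < Ns l \<Longrightarrow> n - l < i \<Longrightarrow> C l t i = 0"
    and C_sep: "\<And>l t t'. l \<in> {1..L} \<Longrightarrow> t < Ns l \<Longrightarrow> t' < Ns l \<Longrightarrow> t \<noteq> t' \<Longrightarrow>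
       inner_n n (C l t - C l t') (C l t - C l t') \<ge> 2 * rad l * d"
begin

definition uu where "uu l t = (\<lambda>i. C l t i / rad l - (if i = n - l then 1 else 0))"
definition H where "H l t = hh n (uu l t)"
fun Qr where "Qr [] v = v" | "Qr (t # rs) v = Qr rs (H (length rs + 1) t v)"
definition Q where "Q s = Qr (rev s)"
definition ptc where "ptc s = restrict (\<Sum>j<length s. Q (take j s) (C (j+1) (s!j))) {..<n}"

lemma Q_nil[simp]: "Q [] v = v" unfolding Q_def by simp

lemma Q_snoc: "Q (s @ [t]) v = Q s (H (length s + 1) t v)" unfolding Q_def by simp

lemma Q_isom: "inner_n n (Q s x) (Q s y) = inner_n n x y"
proof (induction s arbitrary: x y rule: rev_induct)
  case (snoc t s)
  then show ?case by (simp add: Q_snoc H_def hh_isom)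
qed simp

lemma ptc_nil: "ptc [] = origin n" unfolding ptc_def origin_def by (simp add: zero_fun_def)

lemma ptc_Rn: "ptc s \<in> Rn n" unfolding ptc_def Rn_def by simp

lemma ptc_snoc: assumes "i < n" shows "(ptc (s @ [t]) - ptc s) i = Q s (C (length s + 1) t) i"
proof -
  define f where "f = (\<lambda>j. Q (take j (s @ [t])) (C (j+1) ((s @ [t]) ! j)))"
  have len: "length (s @ [t]) = Suc (length s)" by simp
  have "(\<Sum>j<length (s @ [t]). f j) = (\<Sum>j<length s. f j) + f (length s)"
    unfolding len by (rule sum.lessThan_Suc)
  moreover have "f (length s) = Q s (C (length s + 1) t)" unfolding f_def by simp
  moreover have "(\<Sum>j<length s. f j) = (\<Sum>j<length s. Q (take j s) (C (j+1) (s ! j)))"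
    unfolding f_def by (intro sum.cong) (auto simp: nth_append)
  ultimately have "(\<Sum>j<length (s @ [t]). f j) = (\<Sum>j<length s. Q (take j s) (C (j+1) (s ! j))) + Q s (C (length s + 1) t)"
    by simp
  then have "(\<Sum>j<length (s @ [t]). f j) i = (\<Sum>j<length s. Q (take j s) (C (j+1) (s ! j))) i + Q s (C (length s + 1) t) i"
    by simp
  then show ?thesis unfolding ptc_def f_def using assms by simp
qed

lemma pv_snoc_old: "j \<le> length s \<Longrightarrow> path_vec ptc (s @ [t]) j = path_vec ptc s j"
  unfolding path_vec_def by simp

lemma pv_snoc_new: "i < n \<Longrightarrow> path_vec ptc (s @ [t]) (length s + 1) i = Q s (C (length s + 1) t) i"
  unfolding path_vec_def using ptc_snoc by simp

definition good where "good s \<longleftrightarrow> (\<forall>j<length s. s ! j < Ns (j + 1))"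

lemma inv:
  assumes "good s" "length s \<le> L" "\<And>i. n - length s \<le> i \<Longrightarrow> i < n \<Longrightarrow> v i = 0" "j \<in> {1..length s}"
  shows "inner_n n (path_vec ptc s j) (Q s v) = 0"
  using assms
proof (induction s arbitrary: v j rule: rev_induct)
  case Nil then show ?case by simp
next
  case (snoc t s)
  define l where "l = length s"
  have lL: "l + 1 \<le> L" using snoc(3) unfolding l_def by simp
  have l1: "l + 1 \<in> {1..L}" using lL by simp
  have gs: "good s" unfolding good_def
  proof (intro allI impI)
    fix j assume j: "j < length s"
    then have "(s @ [t]) ! j < Ns (j + 1)" using snoc(2) unfolding good_def by auto
    then show "s ! j < Ns (j + 1)" using j by (simp add: nth_append)
  qed
  have tN: "t < Ns (l + 1)" using snoc(2) unfolding good_def l_def by (auto simp: nth_append)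
  have Hv0: "H (l + 1) t v i = 0" if "n - l \<le> i" "i < n" for i
    unfolding H_def
  proof (rule hh_supp[of "n - l"])
    fix i assume "n - l \<le> i" "i < n"
    then show "uu (l + 1) t i = 0" unfolding uu_def using C_supp[OF l1 tN, of i] nL lL by auto
  next
    fix i assume "n - l \<le> i" "i < n"
    then show "v i = 0" using snoc(4)[of i] unfolding l_def by auto
  qed (use that in auto)
  show ?case
  proof (cases "j \<le> l")
    case True
    then have j: "j \<in> {1..length s}" using snoc(5) unfolding l_def by auto
    have "inner_n n (path_vec ptc s j) (Q s (H (l + 1) t v)) = 0"
      by (rule snoc.IH[OF gs _ _ j]) (use snoc(3) Hv0 in \<open>auto simp: l_def\<close>)
    then show ?thesis using True by (simp add: pv_snoc_old l_def Q_snoc)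
  next
    case False
    then have j: "j = l + 1" using snoc(5) unfolding l_def by auto
    define c where "c = C (l + 1) t"
    have "inner_n n (path_vec ptc (s @ [t]) j) (Q (s @ [t]) v) = inner_n n (Q s c) (Q s (H (l + 1) t v))"
      unfolding j Q_snoc l_def c_def by (rule inner_n_cong) (use pv_snoc_new[of _ s t] in auto)
    also have "\<dots> = inner_n n c (H (l + 1) t v)" by (rule Q_isom)
    also have "\<dots> = inner_n n (H (l + 1) t c) v" unfolding H_def by (rule hh_selfadj)
    also have "\<dots> = inner_n n (\<lambda>i. rad (l + 1) * (if i = n - (l + 1) then 1 else 0)) v"
    proof (rule inner_n_cong)
      fix i assume i: "i < n"
      show "H (l + 1) t c i = rad (l + 1) * (if i = n - (l + 1) then 1 else 0)"
        unfolding H_def c_def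
        by (rule hh_maps[OF C_norm[OF l1 tN] rad_pos[OF l1] _ _ i]) (use nL lL in \<open>auto simp: uu_def\<close>)
    qed simp
    also have "\<dots> = rad (l + 1) * v (n - (l + 1))"
      unfolding inner_n_scale1 using inner_delta'[of "n - (l + 1)" n v] nL lL by simp
    also have "v (n - (l + 1)) = 0" using snoc(4)[of "n - (l + 1)"] nL lL unfolding l_def by simp
    finally show ?thesis by simp
  qed
qed

lemma step_inner: "inner_n n (ptc (s @ [t]) - ptc s) y = inner_n n (Q s (C (length s + 1) t)) y"
  by (rule inner_n_cong) (use ptc_snoc[of _ s t] in auto)

lemma step_inner2: "inner_n n y (ptc (s @ [t]) - ptc s) = inner_n n y (Q s (C (length s + 1) t))"
  by (rule inner_n_cong) (use ptc_snoc[of _ s t] in auto)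

lemma step_inner3: "inner_n n (ptc (s @ [t]) - ptc s) (ptc (s @ [t']) - ptc s) =
   inner_n n (C (length s + 1) t) (C (length s + 1) t')"
  by (simp add: step_inner step_inner2 Q_isom)

lemma construction: "angle_dense_construction n L d rad Ns ptc"
  unfolding angle_dense_construction_def
proof (intro conjI allI impI ballI)
  show "ptc [] = origin n" by (rule ptc_nil)
next
  fix l s t assume l: "l < L" and s: "s \<in> idx Ns l" and t: "t < Ns (l + 1)"
  have len: "length s = l" and gs: "good s" using s unfolding idx_def good_def by auto
  have l1: "l + 1 \<in> {1..L}" using l by simp
  show "ptc (s @ [t]) \<in> Rn n" by (rule ptc_Rn)
  show "norm_n n (ptc (s @ [t]) - ptc s) = rad (l + 1)"
    unfolding norm_n_def step_inner3 len using C_norm[OF l1 t] rad_pos[OF l1] by simp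
  fix j assume j: "j \<in> {1..l}"
  have "inner_n n (path_vec ptc s j) (Q s (C (l + 1) t)) = 0"
    by (rule inv[OF gs]) (use len l j C_supp[OF l1 t] nL in auto)
  then show "inner_n n (path_vec ptc s j) (ptc (s @ [t]) - ptc s) = 0"
    by (simp add: step_inner2 len)
next
  fix l s assume l: "l < L" and s: "s \<in> idx Ns l"
  have len: "length s = l" using s unfolding idx_def by auto
  have l1: "l + 1 \<in> {1..L}" using l by simp
  define r where "r = rad (l + 1)"
  have r: "r > 0" unfolding r_def by (rule rad_pos[OF l1])
  show "angle_dense n d (ptc s) (Ns (l + 1)) (\<lambda>t. ptc (s @ [t]))"
    unfolding angle_dense_def
  proof (intro allI impI)
    fix j k assume jk: "j < Ns (l + 1)" "k < Ns (l + 1)" "j \<noteq> k"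
    define \<iota> where "\<iota> = inner_n n (C (l + 1) k) (C (l + 1) j)"
    have nk: "norm_n n (ptc (s @ [k]) - ptc s) = r"
      unfolding norm_n_def step_inner3 len r_def using C_norm[OF l1 jk(2)] rad_pos[OF l1] by simp
    have "norm_n n (proj_n n (ptc (s @ [k]) - ptc s) (ptc (s @ [j]) - ptc s) - (ptc (s @ [k]) - ptc s))
        = \<bar>\<iota> / r\<^sup>2 - 1\<bar> * r"
    proof -
      have e: "inner_n n (ptc (s @ [k]) - ptc s) (ptc (s @ [j]) - ptc s) = \<iota>"
        using step_inner3[of s k j] len unfolding \<iota>_def by simp
      show ?thesis using proj_minus_norm[OF r nk, of "ptc (s @ [j]) - ptc s"] unfolding e .
    qed
    moreover have "2 * r * d \<le> 2 * r\<^sup>2 - 2 * \<iota>"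
    proof -
      have "inner_n n (C (l + 1) k - C (l + 1) j) (C (l + 1) k - C (l + 1) j) = 2 * r\<^sup>2 - 2 * \<iota>"
        unfolding inner_n_diff1 inner_n_diff2 \<iota>_def r_def
        using C_norm[OF l1 jk(1)] C_norm[OF l1 jk(2)] inner_n_commute[of n "C (Suc l) j" "C (Suc l) k"] by simp
      then show ?thesis using C_sep[OF l1 jk(2) jk(1)] jk(3) r_def by simp
    qed
    moreover have "\<bar>\<iota> / r\<^sup>2 - 1\<bar> * r \<ge> (1 - \<iota> / r\<^sup>2) * r" using r by (intro mult_right_mono) auto
    moreover have "(1 - \<iota> / r\<^sup>2) * r = (r\<^sup>2 - \<iota>) / r" using r by (simp add: field_simps power2_eq_square)
    moreover have "(r\<^sup>2 - \<iota>) / r \<ge> d" using r calculation(2) by (simp add: field_simps)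
    ultimately show "norm_n n (proj_n n (ptc (s @ [k]) - ptc s) (ptc (s @ [j]) - ptc s) - (ptc (s @ [k]) - ptc s)) \<ge> d"
      by linarith
  qed
qed

end


lemma sum_split_m:
  fixes m n :: nat
  assumes "m < n" "\<And>i. m < i \<Longrightarrow> i < n \<Longrightarrow> f i = (0::real)"
  shows "(\<Sum>i<n. f i) = (\<Sum>i<m. f i) + f m"
proof -
  have "(\<Sum>i<n. f i) = (\<Sum>i<Suc m. f i)"
    by (rule sum.mono_neutral_right) (use assms in auto)
  then show ?thesis by simp
qed

definition cw :: "nat \<Rightarrow> real \<Rightarrow> real \<Rightarrow> (nat \<Rightarrow> int) \<Rightarrow> nat \<Rightarrow> real" where
  "cw m \<eta> r k = (\<lambda>i. if i < m then \<eta> * of_int (k i)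
     else if i = m then sqrt (r\<^sup>2 - (\<Sum>i'<m. (\<eta> * of_int (k i'))\<^sup>2)) else 0)"

lemma cw_supp: "m < i \<Longrightarrow> cw m \<eta> r k i = 0" unfolding cw_def by auto

lemma cw_Y:
  assumes k: "k \<in> PiE {..<m} (\<lambda>_. {- int K..int K})" and bd: "\<eta>\<^sup>2 * real m * (real K)\<^sup>2 \<le> r\<^sup>2"
  shows "(\<Sum>i'<m. (\<eta> * of_int (k i'))\<^sup>2) \<le> r\<^sup>2"
proof -
  have "(\<Sum>i'<m. (\<eta> * of_int (k i'))\<^sup>2) \<le> (\<Sum>i'<m. \<eta>\<^sup>2 * (real K)\<^sup>2)"
  proof (rule sum_mono)
    fix i assume "i \<in> {..<m}"
    then have "- int K \<le> k i \<and> k i \<le> int K" using k by (auto simp: PiE_iff)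
    then have "\<bar>k i\<bar> \<le> int K" by arith
    then have "\<bar>real_of_int (k i)\<bar> \<le> real K" by linarith
    then have "(real_of_int (k i))\<^sup>2 \<le> (real K)\<^sup>2" by (metis abs_le_square_iff abs_of_nat)
    then show "(\<eta> * of_int (k i))\<^sup>2 \<le> \<eta>\<^sup>2 * (real K)\<^sup>2"
      by (simp add: power_mult_distrib mult_left_mono)
  qed
  also have "\<dots> = \<eta>\<^sup>2 * real m * (real K)\<^sup>2" by simp
  finally show ?thesis using bd by linarith
qed

lemma cw_norm:
  assumes k: "k \<in> PiE {..<m} (\<lambda>_. {- int K..int K})" and bd: "\<eta>\<^sup>2 * real m * (real K)\<^sup>2 \<le> r\<^sup>2"
    and mn: "m < n"
  shows "inner_n n (cw m \<eta> r k) (cw m \<eta> r k) = r\<^sup>2"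
proof -
  have Y: "(\<Sum>i'<m. (\<eta> * of_int (k i'))\<^sup>2) \<le> r\<^sup>2" by (rule cw_Y[OF k bd])
  have "inner_n n (cw m \<eta> r k) (cw m \<eta> r k) = (\<Sum>i<m. cw m \<eta> r k i * cw m \<eta> r k i) + cw m \<eta> r k m * cw m \<eta> r k m"
    unfolding inner_n_def by (rule sum_split_m[OF mn]) (simp add: cw_supp)
  also have "(\<Sum>i<m. cw m \<eta> r k i * cw m \<eta> r k i) = (\<Sum>i'<m. (\<eta> * of_int (k i'))\<^sup>2)"
    unfolding cw_def by (intro sum.cong) (auto simp: power2_eq_square)
  also have "cw m \<eta> r k m * cw m \<eta> r k m = r\<^sup>2 - (\<Sum>i'<m. (\<eta> * of_int (k i'))\<^sup>2)"
  proof -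
    have "cw m \<eta> r k m = sqrt (r\<^sup>2 - (\<Sum>i'<m. (\<eta> * of_int (k i'))\<^sup>2))" unfolding cw_def by simp
    then show ?thesis using Y by (simp only: real_sqrt_mult_self)
  qed
  finally show ?thesis by simp
qed

lemma cw_sep:
  assumes mn: "m < n"
  shows "inner_n n (cw m \<eta> r k - cw m \<eta> r k') (cw m \<eta> r k - cw m \<eta> r k') \<ge> \<eta>\<^sup>2 * real_of_int (\<Sum>i<m. (k i - k' i)\<^sup>2)"
proof -
  define c where "c = cw m \<eta> r k - cw m \<eta> r k'"
  have "inner_n n c c = (\<Sum>i<m. c i * c i) + c m * c m"
    unfolding inner_n_def by (rule sum_split_m[OF mn]) (simp add: c_def cw_supp)
  also have "(\<Sum>i<m. c i * c i) = (\<Sum>i<m. \<eta>\<^sup>2 * real_of_int ((k i - k' i)\<^sup>2))"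
  proof (rule sum.cong[OF refl])
    fix i assume "i \<in> {..<m}"
    then have "c i = \<eta> * (real_of_int (k i) - real_of_int (k' i))" unfolding c_def cw_def by (simp add: right_diff_distrib)
    then show "c i * c i = \<eta>\<^sup>2 * real_of_int ((k i - k' i)\<^sup>2)" by (simp add: power2_eq_square)
  qed
  also have "\<dots> = \<eta>\<^sup>2 * real_of_int (\<Sum>i<m. (k i - k' i)\<^sup>2)"
    by (simp only: sum_distrib_left[symmetric] of_int_sum)
  finally show ?thesis unfolding c_def[symmetric] by simp
qed


definition rr :: "real \<Rightarrow> nat \<Rightarrow> nat \<Rightarrow> real" where
  "rr b n = (\<lambda>l. real n powr ((1 - b) * 2 powr (- real l)))"
definition dd :: "nat \<Rightarrow> real" where "dd n = 3 * log 2 (real n)"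
definition del :: "real \<Rightarrow> nat \<Rightarrow> nat \<Rightarrow> real" where "del b n l = sqrt (2 * rr b n l * dd n)"
definition KK :: "real \<Rightarrow> nat \<Rightarrow> nat \<Rightarrow> nat" where "KK b n l = nat \<lfloor>rr b n l / del b n l\<rfloor>"
definition eta :: "real \<Rightarrow> nat \<Rightarrow> nat \<Rightarrow> real" where "eta b n l = del b n l / sqrt (real (n - l))"
definition codeP :: "real \<Rightarrow> nat \<Rightarrow> nat \<Rightarrow> (nat \<Rightarrow> int) set \<Rightarrow> bool" where
  "codeP b n l S \<longleftrightarrow> S \<subseteq> PiE {..<n - l} (\<lambda>_. {- int (KK b n l)..int (KK b n l)}) \<and>
     (2 * KK b n l + 1) ^ (n - l) \<le> card S * 6 ^ (n - l) \<and>
     (\<forall>k\<in>S. \<forall>k'\<in>S. k \<noteq> k' \<longrightarrow> int (n - l) \<le> (\<Sum>i<n - l. (k i - k' i)\<^sup>2))"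
definition CS :: "real \<Rightarrow> nat \<Rightarrow> nat \<Rightarrow> (nat \<Rightarrow> int) set" where "CS b n l = (SOME S. codeP b n l S)"
definition en :: "real \<Rightarrow> nat \<Rightarrow> nat \<Rightarrow> nat \<Rightarrow> (nat \<Rightarrow> int)" where
  "en b n l = (SOME f. bij_betw f {0..<card (CS b n l)} (CS b n l))"
definition CC :: "real \<Rightarrow> nat \<Rightarrow> nat \<Rightarrow> nat \<Rightarrow> nat \<Rightarrow> real" where
  "CC b n l t = cw (n - l) (eta b n l) (rr b n l) (en b n l t)"
definition NN :: "nat \<Rightarrow> real \<Rightarrow> nat \<Rightarrow> nat \<Rightarrow> nat" where
  "NN L b n l = (if L + 2 \<le> n \<and> 1 \<le> l \<and> l \<le> L then card (CS b n l) else 0)"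
definition PT :: "nat \<Rightarrow> real \<Rightarrow> nat \<Rightarrow> nat list \<Rightarrow> nat \<Rightarrow> real" where
  "PT L b n = (if L + 2 \<le> n then cons.ptc n (CC b n) (rr b n) else (\<lambda>s. origin n))"

lemma codeP_CS: assumes "l < n" shows "codeP b n l (CS b n l)"
proof -
  have "\<exists>S. codeP b n l S" unfolding codeP_def using code_exists[of "n - l" "KK b n l"] assms by auto
  then show ?thesis unfolding CS_def by (rule someI_ex)
qed

lemma finite_CS: assumes "l < n" shows "finite (CS b n l)"
proof -
  have "finite (PiE {..<n - l} (\<lambda>_. {- int (KK b n l)..int (KK b n l)}))" by (intro finite_PiE) auto
  then show ?thesis using codeP_CS[OF assms, of b] unfolding codeP_def by (auto intro: finite_subset)
qed

lemma en_bij: assumes "l < n" shows "bij_betw (en b n l) {0..<card (CS b n l)} (CS b n l)"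
proof -
  have "\<exists>f. bij_betw f {0..<card (CS b n l)} (CS b n l)" by (rule ex_bij_betw_nat_finite[OF finite_CS[OF assms]])
  then show ?thesis unfolding en_def by (rule someI_ex)
qed

lemma rr_pos: "n > 0 \<Longrightarrow> rr b n l > 0" unfolding rr_def by simp

lemma dd_pos: "n \<ge> 2 \<Longrightarrow> dd n > 0" unfolding dd_def by simp

lemma del_pos: "n \<ge> 2 \<Longrightarrow> del b n l > 0" unfolding del_def using rr_pos[of n b l] dd_pos[of n] by simp

lemma del_sq: "n \<ge> 2 \<Longrightarrow> (del b n l)\<^sup>2 = 2 * rr b n l * dd n"
  unfolding del_def using rr_pos[of n b l] dd_pos[of n] by simp

lemma eta_sq: "n \<ge> 2 \<Longrightarrow> l < n \<Longrightarrow> (eta b n l)\<^sup>2 * real (n - l) = (del b n l)\<^sup>2"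
  unfolding eta_def by (simp add: power_divide)

lemma KK_le: assumes "n \<ge> 2" shows "real (KK b n l) * del b n l \<le> rr b n l"
proof -
  have x: "0 \<le> rr b n l / del b n l" using rr_pos[of n b l] del_pos[OF assms, of b l] assms by simp
  then have "real (KK b n l) = real_of_int \<lfloor>rr b n l / del b n l\<rfloor>" unfolding KK_def by simp
  also have "\<dots> \<le> rr b n l / del b n l" by (rule of_int_floor_le)
  finally have "real (KK b n l) \<le> rr b n l / del b n l" .
  then show ?thesis using del_pos[OF assms, of b l] by (simp add: le_divide_eq)
qed

lemma cons_ok:
  assumes n: "L + 2 \<le> n"
  shows "cons n L (CC b n) (rr b n) (NN L b n) (dd n)"
proof
  show "L < n" using n by simp
  have n2: "n \<ge> 2" using n by simp
  fix l assume l: "l \<in> {1..L}"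
  then have ln: "l < n" and mn: "n - l < n" using n by auto
  have NN: "NN L b n l = card (CS b n l)" unfolding NN_def using n l by auto
  show "rad_pos": "rr b n l > 0" using rr_pos n by simp
  have bd: "(eta b n l)\<^sup>2 * real (n - l) * (real (KK b n l))\<^sup>2 \<le> (rr b n l)\<^sup>2"
  proof -
    have "(eta b n l)\<^sup>2 * real (n - l) * (real (KK b n l))\<^sup>2 = (real (KK b n l) * del b n l)\<^sup>2"
      using eta_sq[OF n2 ln] by (simp add: power_mult_distrib)
    also have "\<dots> \<le> (rr b n l)\<^sup>2"
      using KK_le[OF n2, of b l] del_pos[OF n2, of b l] by (intro power_mono) auto
    finally show ?thesis .
  qed
  have enS: "en b n l t \<in> CS b n l" if "t < NN L b n l" for t
    using en_bij[OF ln, of b] that NN by (auto simp: bij_betw_def)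
  have CSsub: "CS b n l \<subseteq> PiE {..<n - l} (\<lambda>_. {- int (KK b n l)..int (KK b n l)})"
    using codeP_CS[OF ln] unfolding codeP_def by auto
  fix t assume t: "t < NN L b n l"
  show "inner_n n (CC b n l t) (CC b n l t) = (rr b n l)\<^sup>2"
    unfolding CC_def by (rule cw_norm[OF _ bd mn]) (use enS[OF t] CSsub in auto)
  fix i assume "n - l < i"
  then show "CC b n l t i = 0" unfolding CC_def by (rule cw_supp)
next
  have n2: "n \<ge> 2" using n by simp
  fix l t t' assume l: "l \<in> {1..L}" and t: "t < NN L b n l" "t' < NN L b n l" "t \<noteq> t'"
  then have ln: "l < n" and mn: "n - l < n" using n by auto
  have NN: "NN L b n l = card (CS b n l)" unfolding NN_def using n l by auto
  have bij: "bij_betw (en b n l) {0..<card (CS b n l)} (CS b n l)" by (rule en_bij[OF ln, of b])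
  have ne: "en b n l t \<noteq> en b n l t'"
  proof
    assume "en b n l t = en b n l t'"
    moreover have "inj_on (en b n l) {0..<card (CS b n l)}" using bij by (simp add: bij_betw_def)
    ultimately have "t = t'" using t NN by (auto dest: inj_onD)
    then show False using t by simp
  qed
  have inS: "en b n l t \<in> CS b n l" "en b n l t' \<in> CS b n l"
    using bij t NN by (auto simp: bij_betw_def)
  have "int (n - l) \<le> (\<Sum>i<n - l. (en b n l t i - en b n l t' i)\<^sup>2)"
    using codeP_CS[OF ln] inS ne unfolding codeP_def by blast
  then have "real (n - l) \<le> real_of_int (\<Sum>i<n - l. (en b n l t i - en b n l t' i)\<^sup>2)"
    by linarith
  then have "(eta b n l)\<^sup>2 * real (n - l) \<le> (eta b n l)\<^sup>2 * real_of_int (\<Sum>i<n - l. (en b n l t i - en b n l t' i)\<^sup>2)"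
    by (intro mult_left_mono) auto
  also have "\<dots> \<le> inner_n n (CC b n l t - CC b n l t') (CC b n l t - CC b n l t')"
    unfolding CC_def by (rule cw_sep[OF mn])
  finally show "2 * rr b n l * dd n \<le> inner_n n (CC b n l t - CC b n l t') (CC b n l t - CC b n l t')"
    using eta_sq[OF n2 ln] del_sq[OF n2] by simp
qed


lemma PT_construction:
  "angle_dense_construction n L (3 * log 2 (real n)) (\<lambda>l. real n powr ((1 - b) * 2 powr (- real l))) (NN L b n) (PT L b n)"
proof (cases "L + 2 \<le> n")
  case True
  have "angle_dense_construction n L (dd n) (rr b n) (NN L b n) (cons.ptc n (CC b n) (rr b n))"
    by (rule cons.construction[OF cons_ok[OF True]])
  then show ?thesis using True unfolding PT_def dd_def rr_def by simp
next
  case False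
  then have "NN L b n = (\<lambda>_. 0)" unfolding NN_def by auto
  then show ?thesis using False unfolding PT_def angle_dense_construction_def angle_dense_def by simp
qed

lemma NN_pos_bound:
  assumes n: "L + 2 \<le> n" and l: "l \<in> {1..L}"
  shows "NN L b n l > 0"
    and "log 2 (real (NN L b n l)) \<ge> real (n - l) * (((1 - b) * 2 powr (- real l) * log 2 (real n) - log 2 (6 * log 2 (real n))) / 2 - log 2 6)"
proof -
  have n2: "n \<ge> 2" using n by simp
  have ln: "l < n" using n l by auto
  define m where "m = n - l"
  define N where "N = card (CS b n l)"
  define K where "K = KK b n l"
  define r where "r = rr b n l"
  define \<delta> where "\<delta> = del b n l"
  have NN: "NN L b n l = N" unfolding NN_def N_def using n l by auto
  have rpos: "r > 0" unfolding r_def using rr_pos n by simp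
  have dpos: "\<delta> > 0" unfolding \<delta>_def by (rule del_pos[OF n2])
  have code: "(2 * K + 1) ^ m \<le> N * 6 ^ m" using codeP_CS[OF ln, of b] unfolding codeP_def K_def N_def m_def by auto
  have K1: "r / \<delta> \<le> real (2 * K + 1)"
  proof (cases "r / \<delta> \<ge> 1")
    case True
    have "r / \<delta> - 1 < real_of_int \<lfloor>r / \<delta>\<rfloor>" by linarith
    moreover have "real K = real_of_int \<lfloor>r / \<delta>\<rfloor>" unfolding K_def KK_def r_def[symmetric] \<delta>_def[symmetric] using True by simp
    ultimately have "real K > r / \<delta> - 1" by linarith
    then show ?thesis using True by simp
  next
    case False then show ?thesis by simp
  qed
  have pos: "r / \<delta> / 6 > 0" using rpos dpos by simp
  have "(r / \<delta>) ^ m \<le> real (2 * K + 1) ^ m" using K1 rpos dpos by (intro power_mono) auto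
  also have "\<dots> \<le> real N * 6 ^ m"
  proof -
    have "real ((2 * K + 1) ^ m) \<le> real (N * 6 ^ m)" using code by (rule of_nat_mono)
    then show ?thesis by simp
  qed
  finally have A0: "(r / \<delta>) ^ m \<le> real N * 6 ^ m" .
  have "(r / \<delta> / 6) ^ m = (r / \<delta>) ^ m / 6 ^ m" by (simp add: power_divide)
  also have "\<dots> \<le> real N" using A0 by (simp add: pos_divide_le_eq)
  finally have A: "(r / \<delta> / 6) ^ m \<le> real N" .
  have P0: "0 < (r / \<delta> / 6) ^ m" by (rule zero_less_power[OF pos])
  have Npos: "real N > 0" using A P0 by linarith
  then show "NN L b n l > 0" unfolding NN by simp
  have "log 2 (real N) \<ge> log 2 ((r / \<delta> / 6) ^ m)" using A pos P0 Npos by (subst log_le_cancel_iff) auto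
  also have "log 2 ((r / \<delta> / 6) ^ m) = real m * (log 2 (r / \<delta>) - log 2 6)"
    using pos rpos dpos by (simp add: log_nat_power log_divide log_mult)
  also have "log 2 (r / \<delta>) = (log 2 r - log 2 (6 * log 2 (real n))) / 2"
  proof -
    have "(r / \<delta>)\<^sup>2 = r / (6 * log 2 (real n))"
      using del_sq[OF n2, of b l] rpos unfolding \<delta>_def[symmetric] r_def[symmetric] dd_def
      by (simp add: power_divide power2_eq_square field_simps)
    moreover have "log 2 ((r / \<delta>)\<^sup>2) = 2 * log 2 (r / \<delta>)"
      using log_nat_power[of "r / \<delta>" 2 2] rpos dpos by simp
    ultimately have "2 * log 2 (r / \<delta>) = log 2 (r / (6 * log 2 (real n)))" by simp
    also have "\<dots> = log 2 r - log 2 (6 * log 2 (real n))"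
    proof -
      have "log 2 (real n) > 0" using n2 by simp
      then show ?thesis using rpos by (subst log_divide) auto
    qed
    finally show ?thesis by simp
  qed
  also have "log 2 r = (1 - b) * 2 powr (- real l) * log 2 (real n)"
    unfolding r_def rr_def using n2 by (simp add: log_powr)
  finally show "log 2 (real (NN L b n l)) \<ge> real (n - l) * (((1 - b) * 2 powr (- real l) * log 2 (real n) - log 2 (6 * log 2 (real n))) / 2 - log 2 6)"
    unfolding NN m_def .
qed


lemma log_prod_NN:
  assumes n: "L + 2 \<le> n"
  shows "log 2 (real (\<Prod>l\<in>{1..L}. NN L b n l)) = (\<Sum>l\<in>{1..L}. log 2 (real (NN L b n l)))"
proof -
  have pos: "real (NN L b n l) \<noteq> 0" if "l \<in> {1..L}" for l using NN_pos_bound(1)[OF n that, of b] by simp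
  have "log 2 (real (\<Prod>l\<in>{1..L}. NN L b n l)) = ln (\<Prod>l\<in>{1..L}. real (NN L b n l)) / ln 2"
    by (simp add: log_def of_nat_prod)
  also have "\<dots> = (\<Sum>l\<in>{1..L}. ln (real (NN L b n l))) / ln 2" using pos by (subst ln_prod) auto
  also have "\<dots> = (\<Sum>l\<in>{1..L}. log 2 (real (NN L b n l)))" by (simp add: log_def sum_divide_distrib)
  finally show ?thesis .
qed

lemma g_alg:
  fixes X Y a c :: real
  assumes "X > 0" "real n > 0" "l \<le> n"
  shows "(real n - real l) / real n * (a / 2 - (Y / X / 2 + c * (1 / X)))
     = real (n - l) * ((a * X - Y) / 2 - c) / (real n * X)"
proof -
  have "real (n - l) = real n - real l" using assms by simp
  moreover have "a / 2 - (Y / X / 2 + c * (1 / X)) = ((a * X - Y) / 2 - c) / X"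
    using assms by (simp add: field_simps)
  ultimately show ?thesis using assms by simp
qed

lemma g_lim:
  fixes a :: real and l :: nat
  shows "(\<lambda>n. real (n - l) * ((a * log 2 (real n) - log 2 (6 * log 2 (real n))) / 2 - log 2 6) / (real n * log 2 (real n)))
     \<longlonglongrightarrow> a / 2"
proof -
  have h: "(\<lambda>n. log 2 (6 * log 2 (real n)) / log 2 (real n)) \<longlonglongrightarrow> 0" by real_asymp
  have k: "(\<lambda>n. 1 / log 2 (real n)) \<longlonglongrightarrow> 0" by real_asymp
  have q: "(\<lambda>n. (real n - real l) / real n) \<longlonglongrightarrow> 1" by real_asymp
  have lim: "(\<lambda>n. (real n - real l) / real n * (a / 2 - (log 2 (6 * log 2 (real n)) / log 2 (real n) / 2 + log 2 6 * (1 / log 2 (real n)))))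
     \<longlonglongrightarrow> 1 * (a / 2 - (0 / 2 + log 2 6 * 0))"
    by (intro tendsto_intros h k q) auto
  have ev: "eventually (\<lambda>n. (real n - real l) / real n * (a / 2 - (log 2 (6 * log 2 (real n)) / log 2 (real n) / 2 + log 2 6 * (1 / log 2 (real n))))
     = real (n - l) * ((a * log 2 (real n) - log 2 (6 * log 2 (real n))) / 2 - log 2 6) / (real n * log 2 (real n))) sequentially"
  proof (rule eventually_mono[OF eventually_ge_at_top[of "l + 2"]])
    fix n assume n: "l + 2 \<le> n"
    then have "log 2 (real n) > 0" by simp
    moreover have "real (n - l) = real n - real l" using n by simp
    show "(real n - real l) / real n * (a / 2 - (log 2 (6 * log 2 (real n)) / log 2 (real n) / 2 + log 2 6 * (1 / log 2 (real n))))
     = real (n - l) * ((a * log 2 (real n) - log 2 (6 * log 2 (real n))) / 2 - log 2 6) / (real n * log 2 (real n))"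
      by (rule g_alg) (use n \<open>log 2 (real n) > 0\<close> in auto)
  qed
  show ?thesis using Lim_transform_eventually[OF lim ev] by simp
qed

lemma rate:
  assumes "0 < b" "b < 1"
  shows "\<forall>\<epsilon>>0. eventually (\<lambda>n. log 2 (real (\<Prod>l\<in>{1..L}. NN L b n l)) / (real n * log 2 (real n))
          \<ge> (1 - b) / 2 * (\<Sum>l\<in>{1..L}. 2 powr (- real l)) - \<epsilon>) sequentially"
proof (intro allI impI)
  fix \<epsilon> :: real assume e: "\<epsilon> > 0"
  show "eventually (\<lambda>n. log 2 (real (\<Prod>l\<in>{1..L}. NN L b n l)) / (real n * log 2 (real n))
          \<ge> (1 - b) / 2 * (\<Sum>l\<in>{1..L}. 2 powr (- real l)) - \<epsilon>) sequentially"
  proof (cases "L = 0")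
    case True then show ?thesis using e by simp
  next
    case False
    define \<alpha> where "\<alpha> = (\<lambda>l::nat. (1 - b) * 2 powr (- real l))"
    define g where "g = (\<lambda>l n. real (n - l) * ((\<alpha> l * log 2 (real n) - log 2 (6 * log 2 (real n))) / 2 - log 2 6) / (real n * log 2 (real n)))"
    have evl: "\<forall>l\<in>{1..L}. eventually (\<lambda>n. g l n > \<alpha> l / 2 - \<epsilon> / real L) sequentially"
    proof
      fix l assume "l \<in> {1..L}"
      have "g l \<longlonglongrightarrow> \<alpha> l / 2" unfolding g_def by (rule g_lim)
      moreover have "\<alpha> l / 2 - \<epsilon> / real L < \<alpha> l / 2" using e False by simp
      ultimately show "eventually (\<lambda>n. g l n > \<alpha> l / 2 - \<epsilon> / real L) sequentially"
        by (rule order_tendstoD(1))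
    qed
    have ev: "eventually (\<lambda>n. (\<forall>l\<in>{1..L}. g l n > \<alpha> l / 2 - \<epsilon> / real L) \<and> L + 2 \<le> n) sequentially"
      using eventually_ball_finite[OF _ evl] eventually_ge_at_top[of "L + 2"] by (auto intro: eventually_conj)
    show ?thesis
    proof (rule eventually_mono[OF ev])
      fix n assume H: "(\<forall>l\<in>{1..L}. g l n > \<alpha> l / 2 - \<epsilon> / real L) \<and> L + 2 \<le> n"
      then have n: "L + 2 \<le> n" by simp
      have D: "real n * log 2 (real n) > 0" using n by simp
      have "(1 - b) / 2 * (\<Sum>l\<in>{1..L}. 2 powr (- real l)) - \<epsilon> = (\<Sum>l\<in>{1..L}. \<alpha> l / 2 - \<epsilon> / real L)"
        using False unfolding \<alpha>_def by (simp add: sum_subtractf sum_distrib_left sum_divide_distrib)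
      also have "\<dots> \<le> (\<Sum>l\<in>{1..L}. g l n)"
      proof (rule sum_mono)
        fix l assume "l \<in> {1..L}"
        then have "g l n > \<alpha> l / 2 - \<epsilon> / real L" using H by blast
        then show "\<alpha> l / 2 - \<epsilon> / real L \<le> g l n" by simp
      qed
      also have "\<dots> \<le> (\<Sum>l\<in>{1..L}. log 2 (real (NN L b n l))) / (real n * log 2 (real n))"
        unfolding sum_divide_distrib g_def \<alpha>_def using NN_pos_bound(2)[OF n] D
        by (intro sum_mono divide_right_mono) auto
      also have "\<dots> = log 2 (real (\<Prod>l\<in>{1..L}. NN L b n l)) / (real n * log 2 (real n))"
        unfolding log_prod_NN[OF n] ..
      finally show "log 2 (real (\<Prod>l\<in>{1..L}. NN L b n l)) / (real n * log 2 (real n))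
          \<ge> (1 - b) / 2 * (\<Sum>l\<in>{1..L}. 2 powr (- real l)) - \<epsilon>" .
    qed
  qed
qed


lemma r_sq_le:
  fixes b :: real
  assumes b: "b < 1" and n: "n \<ge> 1" and jl: "real j \<ge> real l + 1"
  shows "(real n powr ((1 - b) * 2 powr (- real j)))\<^sup>2 \<le> real n powr ((1 - b) * 2 powr (- real l))"
proof -
  have "(real n powr ((1 - b) * 2 powr (- real j)))\<^sup>2 = real n powr (2 * ((1 - b) * 2 powr (- real j)))"
    using n by (simp add: power2_eq_square powr_add[symmetric])
  also have "\<dots> \<le> real n powr ((1 - b) * 2 powr (- real l))"
  proof (rule powr_mono)
    have "2 * 2 powr (- real j) = 2 powr (1 - real j)" by (simp add: powr_diff powr_minus field_simps)
    also have "\<dots> \<le> 2 powr (- real l)" using jl by (intro powr_mono) auto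
    finally have "2 * 2 powr (- real j) \<le> 2 powr (- real l)" .
    then have "(1 - b) * (2 * 2 powr (- real j)) \<le> (1 - b) * 2 powr (- real l)" using b by (intro mult_left_mono) auto
    then show "2 * ((1 - b) * 2 powr (- real j)) \<le> (1 - b) * 2 powr (- real l)" by simp
  qed (use n in auto)
  finally show ?thesis .
qed

theorem theorem5:
  fixes L :: nat and b :: real
  assumes "0 < b" and "b < 1"
  shows "\<exists>(Ns :: nat \<Rightarrow> nat \<Rightarrow> nat) (pt :: nat \<Rightarrow> nat list \<Rightarrow> nat \<Rightarrow> real).
    (\<forall>n. angle_dense_construction n L (3 * log 2 (real n))
            (\<lambda>l. real n powr ((1 - b) * 2 powr (- real l))) (Ns n) (pt n)) \<and>
    (\<forall>\<epsilon>>0. eventually (\<lambda>n.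
        log 2 (real (\<Prod>l\<in>{1..L}. Ns n l)) / (real n * log 2 (real n))
          \<ge> (1 - b) / 2 * (\<Sum>l\<in>{1..L}. 2 powr (- real l)) - \<epsilon>) sequentially) \<and>
    (\<forall>P>0. \<forall>\<sigma>>0. \<exists>n0. \<forall>n\<ge>n0.
        (\<forall>s\<in>idx (Ns n) L. (norm_n n (pt n s))\<^sup>2 \<le> real n * P) \<and>
        DI_code n P \<sigma> (idx (Ns n) L) (pt n) (decoding_set n L (pt n))
          (real L * (2 * Phi (- log 2 (real n) / \<sigma>))) (2 * Phi (- log 2 (real n) / \<sigma>)))"
proof (intro exI[of _ "NN L b"] exI[of _ "PT L b"] conjI)
  show "\<forall>n. angle_dense_construction n L (3 * log 2 (real n))
            (\<lambda>l. real n powr ((1 - b) * 2 powr (- real l))) (NN L b n) (PT L b n)"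
    using PT_construction by blast
next
  show "\<forall>\<epsilon>>0. eventually (\<lambda>n.
        log 2 (real (\<Prod>l\<in>{1..L}. NN L b n l)) / (real n * log 2 (real n))
          \<ge> (1 - b) / 2 * (\<Sum>l\<in>{1..L}. 2 powr (- real l)) - \<epsilon>) sequentially"
    by (rule rate[OF assms])
next
  show "\<forall>P>0. \<forall>\<sigma>>0. \<exists>n0. \<forall>n\<ge>n0.
        (\<forall>s\<in>idx (NN L b n) L. (norm_n n (PT L b n s))\<^sup>2 \<le> real n * P) \<and>
        DI_code n P \<sigma> (idx (NN L b n) L) (PT L b n) (decoding_set n L (PT L b n))
          (real L * (2 * Phi (- log 2 (real n) / \<sigma>))) (2 * Phi (- log 2 (real n) / \<sigma>))"
  proof (intro allI impI)
  fix P \<sigma> :: real assume P: "P > 0" and \<sigma>: "\<sigma> > 0"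
  have e1: "eventually (\<lambda>n. real L * real n powr (1 - b) \<le> real n * P) sequentially"
    using assms(1) P by real_asymp
  have e2: "eventually (\<lambda>n. log 2 (real n) \<ge> 6 * real L) sequentially"
    by real_asymp
  have e3: "eventually (\<lambda>n. n \<ge> L + 2) sequentially" by (rule eventually_ge_at_top)
  have "eventually (\<lambda>n. real L * real n powr (1 - b) \<le> real n * P \<and> log 2 (real n) \<ge> 6 * real L \<and> n \<ge> L + 2) sequentially"
    by (intro eventually_conj e1 e2 e3)
  then obtain n0 where n0: "\<And>n. n \<ge> n0 \<Longrightarrow> real L * real n powr (1 - b) \<le> real n * P \<and> log 2 (real n) \<ge> 6 * real L \<and> n \<ge> L + 2"
    unfolding eventually_sequentially by blast
  show "\<exists>n0. \<forall>n\<ge>n0.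
        (\<forall>s\<in>idx (NN L b n) L. (norm_n n (PT L b n s))\<^sup>2 \<le> real n * P) \<and>
        DI_code n P \<sigma> (idx (NN L b n) L) (PT L b n) (decoding_set n L (PT L b n))
          (real L * (2 * Phi (- log 2 (real n) / \<sigma>))) (2 * Phi (- log 2 (real n) / \<sigma>))"
  proof (intro exI[of _ n0] allI impI)
    fix n assume "n \<ge> n0"
    note H = n0[OF this]
    have n2: "n \<ge> 2" and n1: "n \<ge> 1" using H by auto
    define r where "r = (\<lambda>l. real n powr ((1 - b) * 2 powr (- real l)))"
    interpret A: adc n L "3 * log 2 (real n)" r "NN L b n" "PT L b n"
      unfolding adc_def r_def by (rule PT_construction)
    have rpos: "\<forall>l\<in>{1..L}. r l > 0" unfolding r_def using n1 by simp
    have rtail: "\<forall>l\<in>{1..L}. (\<Sum>j\<in>{l<..L}. (r j)\<^sup>2) \<le> real L * r l"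
    proof
      fix l assume l: "l \<in> {1..L}"
      have "(\<Sum>j\<in>{l<..L}. (r j)\<^sup>2) \<le> (\<Sum>j\<in>{l<..L}. r l)"
        unfolding r_def by (intro sum_mono r_sq_le[OF assms(2) n1]) auto
      also have "\<dots> = real (L - l) * r l" by simp
      also have "\<dots> \<le> real L * r l" using rpos l by (intro mult_right_mono) (auto simp: less_imp_le)
      finally show "(\<Sum>j\<in>{l<..L}. (r j)\<^sup>2) \<le> real L * r l" .
    qed
    have pow: "(\<Sum>j\<in>{1..L}. (r j)\<^sup>2) \<le> real n * P"
    proof -
      have "(\<Sum>j\<in>{1..L}. (r j)\<^sup>2) \<le> (\<Sum>j\<in>{1..L}. real n powr ((1 - b) * 2 powr (- real (0::nat))))"
        unfolding r_def by (intro sum_mono r_sq_le[OF assms(2) n1]) auto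
      also have "\<dots> = real L * real n powr (1 - b)" by simp
      also have "\<dots> \<le> real n * P" using H by simp
      finally show ?thesis .
    qed
    show "(\<forall>s\<in>idx (NN L b n) L. (norm_n n (PT L b n s))\<^sup>2 \<le> real n * P) \<and>
        DI_code n P \<sigma> (idx (NN L b n) L) (PT L b n) (decoding_set n L (PT L b n))
          (real L * (2 * Phi (- log 2 (real n) / \<sigma>))) (2 * Phi (- log 2 (real n) / \<sigma>))"
      by (rule A.DI_main[OF \<sigma> refl _ _ refl rpos rtail pow]) (use H n2 in auto)
  qed
  qed
qed


end
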